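(* Let $S\in\mathrm{Sp}(2n,\mathbb R)$ with largest singular value $e^{s}$, let $\bm f\in\mathbb Z_{\ge0}^n$ with $f_{\max}=\max_if_i$, and let $M=S\,\mathrm{diag}(D,D)\,S^T$ where $D=\mathrm{diag}(\tfrac12+f_1,\dots,\tfrac12+f_n)$. Let $0\le\varepsilon<1/4$ and let $F$ be a real symmetric matrix with $\|F\|\le1$ such that $M'=M+\varepsilon F$ is a valid covariance matrix. If $R'\in\mathrm{Sp}(2n,\mathbb R)$ satisfies $M'=R'\,\mathrm{diag}(D',D')\,R'^T$ for a diagonal matrix $D'$ with positive entries, then $$\min_{O\in\mathrm{Sp}(2n,\mathbb R)\cap\mathrm O(2n)}\|R'^{-1}S-O\|\le 24\,\varepsilon^{1/8}e^{21s/4}n^{3/2}(1+f_{\max})^{3/2}.$$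
   Context: $\mathrm{Sp}(2n,\mathbb R)=\{S\in\mathbb R^{2n\times2n}: S\Omega S^T=\Omega\}$ with $\Omega=\begin{pmatrix}0&I\\-I&0\end{pmatrix}$; $\mathrm O(2n)$ is the real orthogonal group. A valid covariance matrix is a real symmetric positive-definite $2n\times 2n$ matrix all of whose symplectic eigenvalues are $\ge 1/2$ (the symplectic eigenvalues of $M$ are the $\nu_i>0$ with $M=R\,\mathrm{diag}(\nu,\nu)R^T$ for some $R\in\mathrm{Sp}(2n,\mathbb R)$, by Williamson's theorem). $\|\cdot\|$ is the operator norm. *)

theory Defs
  imports "HOL-Analysis.Analysis"
begin

text \<open>Real 2n x 2n matrices are indexed by the sum type 'n + 'n, where CARD('n) = n:
  the first block of coordinates is Inl i (i.e. x_i), the second is Inr i (i.e. p_i).\<close>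

definition Omega :: "real^('n::finite + 'n)^('n + 'n)" where
  "Omega = (\<chi> i j. (case (i, j) of
       (Inl a, Inr b) \<Rightarrow> (if a = b then 1 else 0)
     | (Inr a, Inl b) \<Rightarrow> (if a = b then -1 else 0)
     | _ \<Rightarrow> 0))"

definition symplectic :: "real^('n::finite + 'n)^('n + 'n) \<Rightarrow> bool" where
  "symplectic S \<longleftrightarrow> S ** Omega ** transpose S = Omega"

definition diag2 :: "real^('n::finite) \<Rightarrow> real^('n + 'n)^('n + 'n)" where
  "diag2 d = (\<chi> i j. if i = j then (case i of Inl a \<Rightarrow> d $ a | Inr a \<Rightarrow> d $ a) else 0)"

definition opnorm :: "real^'m^'k \<Rightarrow> real" where
  "opnorm A = onorm (\<lambda>x. A *v x)"

definition symmetric_mat :: "real^'m^'m \<Rightarrow> bool" where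
  "symmetric_mat A \<longleftrightarrow> transpose A = A"

definition posdef_mat :: "real^'m^'m \<Rightarrow> bool" where
  "posdef_mat A \<longleftrightarrow> (\<forall>x. x \<noteq> 0 \<longrightarrow> x \<bullet> (A *v x) > 0)"

definition symplectic_eigenvalues :: "real^('n::finite + 'n)^('n + 'n) \<Rightarrow> real set" where
  "symplectic_eigenvalues M = {\<nu> $ i | \<nu> i. \<exists>R. symplectic R \<and> (\<forall>k. \<nu> $ k > 0) \<and>
       M = R ** diag2 \<nu> ** transpose R}"

definition valid_cov :: "real^('n::finite + 'n)^('n + 'n) \<Rightarrow> bool" where
  "valid_cov M \<longleftrightarrow> symmetric_mat M \<and> posdef_mat M \<and>
     (\<forall>v \<in> symplectic_eigenvalues M. v \<ge> 1/2)"

end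

theory Submission
  imports Defs
begin


lemma matrix_add_rdistrib: "((A::real^'n^'m) + B) ** C = A ** C + B ** C"
  by (vector matrix_matrix_mult_def sum.distrib[symmetric] field_simps)
lemma matrix_diff_ldistrib: "(A::real^'n^'m) ** (B - C) = A ** B - A ** C"
  by (vector matrix_matrix_mult_def sum_subtractf[symmetric] field_simps)
lemma matrix_diff_rdistrib: "((A::real^'n^'m) - B) ** C = A ** C - B ** C"
  by (vector matrix_matrix_mult_def sum_subtractf[symmetric] field_simps)
lemma matrix_neg_left: "(- (A::real^'n^'m)) ** B = - (A ** B)"
  by (vector matrix_matrix_mult_def sum_negf[symmetric])
lemma matrix_neg_right: "(A::real^'n^'m) ** (- B) = - (A ** B)"
  by (vector matrix_matrix_mult_def sum_negf[symmetric])
lemma matrix_scaleR_left: "(c *\<^sub>R (A::real^'n^'m)) ** B = c *\<^sub>R (A ** B)"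
  by (simp add: scalar_matrix_assoc)
lemma matrix_scaleR_right: "(A::real^'n^'m) ** (c *\<^sub>R B) = c *\<^sub>R (A ** B)"
  by (simp add: matrix_scalar_ac scalar_matrix_assoc)
lemma transpose_add: "transpose ((A::real^'n^'m) + B) = transpose A + transpose B"
  by (simp add: transpose_def vec_eq_iff)
lemma transpose_diff: "transpose ((A::real^'n^'m) - B) = transpose A - transpose B"
  by (simp add: transpose_def vec_eq_iff)
lemma transpose_neg: "transpose (- (A::real^'n^'m)) = - transpose A"
  by (simp add: transpose_def vec_eq_iff)

definition opn :: "real^'n^'m \<Rightarrow> real" where "opn A = onorm ((*v) A)"

lemma opnorm_opn: "opnorm A = opn A" by (simp add: opnorm_def opn_def)

lemma opn_mv: "norm (A *v x) \<le> opn A * norm x"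
  unfolding opn_def by (rule onorm[OF matrix_vector_mul_bounded_linear])
lemma opn_nonneg: "0 \<le> opn A"
  unfolding opn_def by (rule onorm_pos_le[OF matrix_vector_mul_bounded_linear])
lemma opn_le: "(\<And>x. norm (A *v x) \<le> b * norm x) \<Longrightarrow> opn A \<le> b"
  unfolding opn_def by (rule onorm_le)
lemma opn_mul: "opn ((A::real^'n^'m) ** B) \<le> opn A * opn B"
proof (rule opn_le)
  fix x
  have "norm ((A ** B) *v x) = norm (A *v (B *v x))" by (simp add: matrix_vector_mul_assoc)
  also have "\<dots> \<le> opn A * norm (B *v x)" by (rule opn_mv)
  also have "\<dots> \<le> opn A * (opn B * norm x)" by (rule mult_left_mono[OF opn_mv opn_nonneg])
  finally show "norm ((A ** B) *v x) \<le> opn A * opn B * norm x" by (simp add: mult.assoc)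
qed
lemma opn_add: "opn ((A::real^'n^'m) + B) \<le> opn A + opn B"
proof (rule opn_le)
  fix x
  have "norm ((A + B) *v x) \<le> norm (A *v x) + norm (B *v x)"
    by (simp add: matrix_vector_mult_add_rdistrib norm_triangle_ineq)
  also have "\<dots> \<le> opn A * norm x + opn B * norm x" by (intro add_mono opn_mv)
  finally show "norm ((A + B) *v x) \<le> (opn A + opn B) * norm x" by (simp add: algebra_simps)
qed
lemma opn_neg: "opn (- (A::real^'n^'m)) = opn A"
  unfolding opn_def
  by (metis (no_types) matrix_vector_mul_bounded_linear onorm_neg matrix_vector_mult_diff_rdistrib
       diff_0 matrix_vector_mult_0 ext)
lemma opn_diff: "opn ((A::real^'n^'m) - B) \<le> opn A + opn B"
  using opn_add[of A "-B"] by (simp add: opn_neg)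
lemma opn_scaleR: "opn (c *\<^sub>R (A::real^'n^'m)) = \<bar>c\<bar> * opn A"
proof -
  have "(*v) (c *\<^sub>R A) = (\<lambda>x. c *\<^sub>R (A *v x))"
    by (rule ext) (simp add: matrix_vector_mult_def vec_eq_iff sum_distrib_left mult.assoc)
  then show ?thesis unfolding opn_def
    using onorm_scaleR[OF matrix_vector_mul_bounded_linear] by simp
qed

lemma opn_transpose_le: "opn (transpose (A::real^'n^'m)) \<le> opn A"
proof (rule opn_le)
  fix x :: "real^'m"
  let ?y = "transpose A *v x"
  have "norm ?y ^ 2 = inner ?y ?y" by (simp add: power2_norm_eq_inner)
  also have "\<dots> = inner (x v* A) ?y" by simp
  also have "\<dots> = inner x (A *v ?y)" by (rule dot_lmul_matrix)
  also have "\<dots> \<le> norm x * norm (A *v ?y)" by (rule norm_cauchy_schwarz)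
  also have "\<dots> \<le> norm x * (opn A * norm ?y)" by (rule mult_left_mono[OF opn_mv norm_ge_zero])
  finally have h: "norm ?y * norm ?y \<le> (opn A * norm x) * norm ?y" by (simp add: power2_eq_square algebra_simps)
  show "norm ?y \<le> opn A * norm x"
  proof (cases "norm ?y = 0")
    case True then show ?thesis using opn_nonneg[of A] by simp
  next
    case False then show ?thesis using h by (simp add: mult_le_cancel_right)
  qed
qed

lemma opn_transpose: "opn (transpose (A::real^'n^'m)) = opn A"
  using opn_transpose_le[of A] opn_transpose_le[of "transpose A"] by simp

lemma norm_sq_vec: "norm (x::real^'n) ^ 2 = (\<Sum>i\<in>UNIV. (x$i)^2)"
proof -
  have "norm x ^ 2 = inner x x" by (rule power2_norm_eq_inner)
  then show ?thesis by (simp add: inner_vec_def power2_eq_square)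
qed

lemma frob_sq: "norm (A::real^'n^'m) ^ 2 = (\<Sum>i\<in>UNIV. \<Sum>j\<in>UNIV. (A$i$j)^2)"
proof -
  have "norm A ^ 2 = inner A A" by (rule power2_norm_eq_inner)
  then show ?thesis by (simp add: inner_vec_def power2_eq_square)
qed

lemma frob_transpose: "norm (transpose (A::real^'n^'m)) = norm A"
proof -
  have "norm (transpose A) ^ 2 = norm A ^ 2"
    unfolding frob_sq by (simp add: transpose_def) (rule sum.swap)
  then show ?thesis by (simp add: power2_eq_iff_nonneg)
qed

lemma frob_mono: assumes "\<And>i j. \<bar>(A::real^'n^'m)$i$j\<bar> \<le> \<bar>B$i$j\<bar>" shows "norm A \<le> norm B"
proof -
  have "norm A ^ 2 \<le> norm B ^ 2"
    unfolding frob_sq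
    by (intro sum_mono) (use assms in \<open>simp add: abs_le_square_iff\<close>)
  then show ?thesis by (simp add: power2_le_iff_abs_le)
qed

lemma opn_le_frob: "opn (A::real^'n^'m) \<le> norm A"
proof (rule opn_le)
  fix x :: "real^'n"
  have "norm (A *v x) ^ 2 = (\<Sum>i\<in>UNIV. (inner (A$i) x)^2)"
    by (simp add: norm_sq_vec matrix_vector_mul_component)
  also have "\<dots> \<le> (\<Sum>i\<in>UNIV. (norm (A$i))^2 * (norm x)^2)"
  proof (intro sum_mono)
    fix i
    have "\<bar>inner (A$i) x\<bar> \<le> \<bar>norm (A$i) * norm x\<bar>" using Cauchy_Schwarz_ineq2[of "A$i" x] by simp
    then have "(inner (A$i) x)^2 \<le> (norm (A$i) * norm x)^2"
      by (simp only: abs_le_square_iff)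
    then show "(inner (A$i) x)^2 \<le> (norm (A$i))^2 * (norm x)^2"
      by (simp only: power_mult_distrib)
  qed
  also have "\<dots> = norm A ^ 2 * norm x ^ 2"
    by (simp add: sum_distrib_right power2_norm_eq_inner inner_vec_def)
  finally have "norm (A *v x) ^ 2 \<le> (norm A * norm x) ^ 2" by (simp add: power_mult_distrib)
  then show "norm (A *v x) \<le> norm A * norm x" by (simp add: power2_le_iff_abs_le)
qed

lemma frob_sq_cols: "norm (A::real^'n^'m) ^ 2 = (\<Sum>j\<in>UNIV. norm (column j A) ^ 2)"
proof -
  have "norm A ^ 2 = norm (transpose A) ^ 2" by (simp add: frob_transpose)
  also have "\<dots> = (\<Sum>j\<in>UNIV. norm (column j A) ^ 2)"
    by (simp add: power2_norm_eq_inner inner_vec_def transpose_def column_def)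
  finally show ?thesis .
qed

lemma column_mult: "column j ((A::real^'n^'m) ** B) = A *v column j B"
  by (simp add: column_def matrix_matrix_mult_def matrix_vector_mult_def vec_eq_iff)

lemma frob_mul_left: "norm ((A::real^'n^'m) ** B) \<le> opn A * norm B"
proof -
  have "norm (A ** B) ^ 2 = (\<Sum>j\<in>UNIV. norm (A *v column j B) ^ 2)"
    by (simp add: frob_sq_cols column_mult)
  also have "\<dots> \<le> (\<Sum>j\<in>UNIV. (opn A * norm (column j B)) ^ 2)"
    by (intro sum_mono power_mono opn_mv norm_ge_zero)
  also have "\<dots> = (opn A * norm B) ^ 2"
    by (simp add: frob_sq_cols[of B] power_mult_distrib sum_distrib_left)
  finally show ?thesis using opn_nonneg[of A] by (simp add: power2_le_iff_abs_le)
qed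

lemma frob_mul_right: "norm ((A::real^'n^'m) ** B) \<le> norm A * opn B"
proof -
  have "norm (A ** B) = norm (transpose B ** transpose A)"
    by (metis frob_transpose matrix_transpose_mul)
  also have "\<dots> \<le> opn (transpose B) * norm (transpose A)" by (rule frob_mul_left)
  finally show ?thesis by (simp add: opn_transpose frob_transpose mult.commute)
qed

lemma frob_mul: "norm ((A::real^'n^'m) ** B) \<le> norm A * norm B"
  by (meson frob_mul_left opn_le_frob mult_right_mono norm_ge_zero order_trans)

lemma frob_le_opn: "norm (A::real^'n^'m) \<le> sqrt (real CARD('n)) * opn A"
proof -
  have c: "norm (column j A) \<le> opn A" for j
  proof -
    have "column j A = A *v axis j 1"
      by (simp add: column_def matrix_vector_mult_def vec_eq_iff axis_def if_distrib cong: if_cong)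
    then show ?thesis using opn_mv[of A "axis j 1"] by simp
  qed
  have "norm A ^ 2 \<le> (\<Sum>j\<in>(UNIV::'n set). opn A ^ 2)"
    unfolding frob_sq_cols by (intro sum_mono power_mono c norm_ge_zero)
  also have "\<dots> = (sqrt (real CARD('n)) * opn A) ^ 2" by (simp add: power_mult_distrib)
  finally show ?thesis using opn_nonneg[of A] by (simp add: power2_le_iff_abs_le)
qed

lemma entry_le_opn: "\<bar>(A::real^'n^'m) $ i $ j\<bar> \<le> opn A"
  unfolding opn_def by (rule matrix_component_le_onorm)

lemma orth_norm: assumes "orthogonal_matrix (Q::real^'n^'n)" shows "norm (Q *v x) = norm x"
proof -
  have "norm (Q *v x) ^ 2 = inner (Q *v x) (Q *v x)" by (simp add: power2_norm_eq_inner)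
  also have "\<dots> = inner x (transpose Q *v (Q *v x))" by (metis dot_lmul_matrix vector_transpose_matrix)
  also have "\<dots> = inner x ((transpose Q ** Q) *v x)" by (simp add: matrix_vector_mul_assoc)
  also have "\<dots> = norm x ^ 2" using assms by (simp add: orthogonal_matrix power2_norm_eq_inner)
  finally show ?thesis by (simp add: power2_eq_iff_nonneg)
qed

lemma orth_opn: assumes "orthogonal_matrix (Q::real^'n^'n)" shows "opn Q \<le> 1"
  by (rule opn_le) (simp add: orth_norm[OF assms])


definition idx :: "'n + 'n \<Rightarrow> 'n" where "idx i = (case i of Inl a \<Rightarrow> a | Inr a \<Rightarrow> a)"
lemma idx_simps[simp]: "idx (Inl a) = a" "idx (Inr a) = a" by (simp_all add: idx_def)

lemma diag2_entry: "diag2 d $ i $ j = (if i = j then d $ idx i else 0)"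
  by (cases i; cases j) (simp_all add: diag2_def)

lemma sum_sumtype: "(\<Sum>k\<in>(UNIV::('n::finite + 'n) set). g k) = (\<Sum>a\<in>UNIV. g (Inl a)) + (\<Sum>a\<in>UNIV. g (Inr a))"
proof -
  have "(\<Sum>k\<in>(UNIV::('n + 'n) set). g k) = (\<Sum>k\<in>(UNIV <+> UNIV). g k)" by simp
  also have "\<dots> = (\<Sum>a\<in>UNIV. g (Inl a)) + (\<Sum>a\<in>UNIV. g (Inr a))" by (subst sum.Plus) (simp_all add: comp_def)
  finally show ?thesis .
qed

lemma diag2_mul_left: "(diag2 d ** (A::real^'m^('n::finite+'n))) $ i $ j = d $ idx i * A $ i $ j"
  by (simp add: matrix_matrix_mult_def diag2_entry if_distrib if_distribR sum.delta cong: if_cong)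
lemma diag2_mul_right: "((A::real^('n::finite+'n)^'m) ** diag2 d) $ i $ j = A $ i $ j * d $ idx j"
  by (simp add: matrix_matrix_mult_def diag2_entry if_distrib if_distribR sum.delta' cong: if_cong)
lemma diag2_mv: "diag2 d *v (x::real^('n::finite+'n)) = (\<chi> i. d $ idx i * x $ i)"
  by (simp add: matrix_vector_mult_def diag2_entry if_distrib if_distribR sum.delta cong: if_cong)
lemma diag2_transpose: "transpose (diag2 (d::real^'n::finite)) = diag2 d"
  by (simp add: transpose_def vec_eq_iff diag2_entry)
lemma diag2_diff: "diag2 (d::real^'n::finite) - diag2 e = diag2 (d - e)"
  by (simp add: vec_eq_iff diag2_entry)
lemma diag2_mul: "diag2 (d::real^'n::finite) ** diag2 e = diag2 (\<chi> a. d$a * e$a)"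
  by (simp add: vec_eq_iff diag2_mul_left diag2_entry)

lemma opn_diag2: assumes "\<And>a. \<bar>(d::real^'n::finite) $ a\<bar> \<le> b" shows "opn (diag2 d) \<le> b"
proof (rule opn_le)
  fix x :: "real^('n+'n)"
  have b: "0 \<le> b" using assms[of undefined] by simp
  have "norm (diag2 d *v x) ^ 2 = (\<Sum>i\<in>UNIV. (d $ idx i * x $ i)^2)"
    by (simp add: diag2_mv norm_sq_vec)
  also have "\<dots> \<le> (\<Sum>i\<in>UNIV. b^2 * (x $ i)^2)"
  proof (intro sum_mono)
    fix i
    have "(d $ idx i)^2 \<le> b^2" using assms[of "idx i"] b by (simp add: abs_le_square_iff[symmetric])
    then show "(d $ idx i * x $ i)^2 \<le> b^2 * (x $ i)^2"
      by (simp add: power_mult_distrib mult_right_mono)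
  qed
  also have "\<dots> = (b * norm x)^2" by (simp add: norm_sq_vec sum_distrib_left power_mult_distrib)
  finally show "norm (diag2 d *v x) \<le> b * norm x" using b by (simp add: power2_le_iff_abs_le)
qed

lemma Omega_entry: "(Omega :: real^('n::finite+'n)^('n+'n)) $ i $ j =
   (case (i, j) of (Inl a, Inr b) \<Rightarrow> (if a = b then 1 else 0) | (Inr a, Inl b) \<Rightarrow> (if a = b then -1 else 0) | _ \<Rightarrow> 0)"
  by (simp add: Omega_def)

lemma Omega_mul_left_Inl: "((Omega :: real^('n::finite+'n)^('n+'n)) ** A) $ Inl a $ j = A $ Inr a $ j"
  by (simp add: matrix_matrix_mult_def sum_sumtype Omega_entry if_distrib if_distribR sum.delta cong: if_cong)
lemma Omega_mul_left_Inr: "((Omega :: real^('n::finite+'n)^('n+'n)) ** A) $ Inr a $ j = - A $ Inl a $ j"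
  by (simp add: matrix_matrix_mult_def sum_sumtype Omega_entry if_distrib if_distribR sum.delta cong: if_cong)
lemma Omega_mul_right_Inl: "(A ** (Omega :: real^('n::finite+'n)^('n+'n))) $ i $ Inl b = - A $ i $ Inr b"
  by (simp add: matrix_matrix_mult_def sum_sumtype Omega_entry if_distrib if_distribR sum.delta' cong: if_cong)
lemma Omega_mul_right_Inr: "(A ** (Omega :: real^('n::finite+'n)^('n+'n))) $ i $ Inr b = A $ i $ Inl b"
  by (simp add: matrix_matrix_mult_def sum_sumtype Omega_entry if_distrib if_distribR sum.delta' cong: if_cong)

lemmas Omega_mul = Omega_mul_left_Inl Omega_mul_left_Inr Omega_mul_right_Inl Omega_mul_right_Inr

lemma forall_sumtype: "(\<forall>i::'a+'b. P i) \<longleftrightarrow> (\<forall>a. P (Inl a)) \<and> (\<forall>a. P (Inr a))"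
  by (metis sum.exhaust)

lemma Omega_sq: "(Omega :: real^('n::finite+'n)^('n+'n)) ** Omega = - mat 1"
  unfolding vec_eq_iff forall_sumtype by (simp add: Omega_mul Omega_entry mat_def)

lemma Omega_transpose: "transpose (Omega :: real^('n::finite+'n)^('n+'n)) = - Omega"
  unfolding vec_eq_iff forall_sumtype by (simp add: transpose_def Omega_entry)

lemma Omega_orth: "orthogonal_matrix (Omega :: real^('n::finite+'n)^('n+'n))"
  unfolding orthogonal_matrix Omega_transpose matrix_neg_left Omega_sq by simp

lemma Omega_opn: "opn (Omega :: real^('n::finite+'n)^('n+'n)) \<le> 1"
  by (rule orth_opn[OF Omega_orth])

lemma diag2_Omega: "diag2 d ** (Omega :: real^('n::finite+'n)^('n+'n)) = Omega ** diag2 d"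
  unfolding vec_eq_iff forall_sumtype by (simp add: Omega_mul diag2_mul_left diag2_mul_right diag2_entry Omega_entry)

lemma frob_Omega_left: "norm ((Omega :: real^('n::finite+'n)^('n+'n)) ** A) \<le> norm A"
  by (metis frob_mul_left Omega_opn mult_right_mono norm_ge_zero mult_1 order_trans)
lemma frob_Omega_right: "norm (A ** (Omega :: real^('n::finite+'n)^('n+'n))) \<le> norm A"
  by (metis frob_mul_right Omega_opn mult_left_mono norm_ge_zero mult_1_right order_trans)


lemma transpose_zero[simp]: "transpose (0::real^'n^'m) = 0"
  by (simp add: transpose_def vec_eq_iff)

lemma cont_transpose: "continuous_on UNIV (transpose :: real^'n^'m \<Rightarrow> real^'m^'n)"
proof -
  have "linear (transpose :: real^'n^'m \<Rightarrow> real^'m^'n)"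
    by (rule linearI) (simp_all add: transpose_add transpose_scalar)
  then show ?thesis by (simp add: linear_conv_bounded_linear linear_continuous_on)
qed
lemma cont_lmul: "continuous_on UNIV (\<lambda>Y::real^'n^'m. (A::real^'m^'k) ** Y)"
proof -
  have "linear (\<lambda>Y::real^'n^'m. A ** Y)"
    by (rule linearI) (simp_all add: matrix_add_ldistrib matrix_scaleR_right)
  then show ?thesis by (simp add: linear_conv_bounded_linear linear_continuous_on)
qed
lemma cont_rmul: "continuous_on UNIV (\<lambda>Y::real^'n^'m. Y ** (A::real^'k^'n))"
proof -
  have "linear (\<lambda>Y::real^'n^'m. Y ** A)"
    by (rule linearI) (simp_all add: matrix_add_rdistrib matrix_scaleR_left)
  then show ?thesis by (simp add: linear_conv_bounded_linear linear_continuous_on)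
qed

lemma comm_mul: "Omega ** A = A ** Omega \<Longrightarrow> Omega ** B = B ** Omega \<Longrightarrow> Omega ** (A ** B) = (A ** B) ** (Omega::real^('n::finite+'n)^('n+'n))"
  by (metis matrix_mul_assoc)
lemma comm_add: "Omega ** A = A ** Omega \<Longrightarrow> Omega ** B = B ** Omega \<Longrightarrow> Omega ** (A + B) = (A + B) ** (Omega::real^('n::finite+'n)^('n+'n))"
  by (simp add: matrix_add_ldistrib matrix_add_rdistrib)
lemma comm_diff: "Omega ** A = A ** Omega \<Longrightarrow> Omega ** B = B ** Omega \<Longrightarrow> Omega ** (A - B) = (A - B) ** (Omega::real^('n::finite+'n)^('n+'n))"
  by (simp add: matrix_diff_ldistrib matrix_diff_rdistrib)
lemma comm_neg: "Omega ** A = A ** Omega \<Longrightarrow> Omega ** (- A) = (- A) ** (Omega::real^('n::finite+'n)^('n+'n))"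
  by (simp add: matrix_neg_left matrix_neg_right)
lemma comm_scale: "Omega ** A = A ** Omega \<Longrightarrow> Omega ** (c *\<^sub>R A) = (c *\<^sub>R A) ** (Omega::real^('n::finite+'n)^('n+'n))"
  by (simp add: matrix_scaleR_left matrix_scaleR_right)

lemma fix_lemma:
  fixes E :: "real^('n::finite+'n)^('n+'n)"
  assumes Esym: "transpose E = E" and Ecomm: "Omega ** E = E ** Omega"
    and Ele: "norm E \<le> e" and e: "e \<le> 1/16"
  shows "\<exists>Y. transpose Y = Y \<and> Omega ** Y = Y ** Omega \<and> norm Y \<le> 2 * e \<and>
     (mat 1 + Y) ** (mat 1 + E) ** (mat 1 + Y) = mat 1"
proof -
  have e0: "0 \<le> e" using Ele norm_ge_zero order_trans by blast
  define \<Phi> where "\<Phi> Y = - ((1/2) *\<^sub>R (E + Y ** E + E ** Y + Y ** Y + Y ** E ** Y))" for Y :: "real^('n+'n)^('n+'n)"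
  define S where "S = {Y :: real^('n+'n)^('n+'n). transpose Y = Y \<and> Omega ** Y = Y ** Omega \<and> norm Y \<le> 2 * e}"
  have closedS: "closed S"
  proof -
    have "S = {Y. transpose Y = Y} \<inter> {Y. Omega ** Y = Y ** Omega} \<inter> cball 0 (2 * e)"
      by (auto simp: S_def)
    moreover have "closed {Y :: real^('n+'n)^('n+'n). transpose Y = Y}"
      by (rule closed_Collect_eq[OF cont_transpose continuous_on_id])
    moreover have "closed {Y :: real^('n+'n)^('n+'n). Omega ** Y = Y ** Omega}"
      by (rule closed_Collect_eq[OF cont_lmul cont_rmul])
    ultimately show ?thesis by auto
  qed
  have "complete S" using closedS complete_eq_closed by blast
  moreover have "S \<noteq> {}" using e0 by (auto simp: S_def intro!: exI[of _ 0])
  moreover have "\<Phi> ` S \<subseteq> S"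
  proof
    fix Z assume "Z \<in> \<Phi> ` S"
    then obtain Y where Y: "Y \<in> S" and Z: "Z = \<Phi> Y" by auto
    have Ysym: "transpose Y = Y" and Ycomm: "Omega ** Y = Y ** Omega" and Yle: "norm Y \<le> 2 * e"
      using Y by (auto simp: S_def)
    have "transpose Z = Z"
      unfolding Z \<Phi>_def
      by (simp only: transpose_neg transpose_scalar transpose_add matrix_transpose_mul Ysym Esym)
         (simp add: matrix_mul_assoc algebra_simps)
    moreover have "Omega ** Z = Z ** Omega"
      unfolding Z \<Phi>_def
      by (intro comm_neg comm_scale comm_add comm_mul Ycomm Ecomm)
    moreover have "norm Z \<le> 2 * e"
    proof -
      have "norm (E + Y ** E + E ** Y + Y ** Y + Y ** E ** Y)
          \<le> norm E + norm Y * norm E + norm E * norm Y + norm Y * norm Y + norm Y * norm E * norm Y"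
        by (intro norm_triangle_le add_mono frob_mul order_refl
            order_trans[OF frob_mul mult_right_mono[OF frob_mul norm_ge_zero]])
      also have "\<dots> \<le> e + 2*e*e + e*(2*e) + (2*e)*(2*e) + (2*e)*e*(2*e)"
        by (intro add_mono mult_mono Ele Yle order_refl norm_ge_zero mult_nonneg_nonneg e0) auto
      also have "\<dots> \<le> 4 * e"
      proof -
        have h1: "e * e \<le> e * (1/16)" using e e0 by (intro mult_left_mono) auto
        have h2: "e * e * e \<le> e * e * (1/16)" using e e0 by (intro mult_left_mono) auto
        have "e + 2*e*e + e*(2*e) + (2*e)*(2*e) + (2*e)*e*(2*e) = e + 8*(e*e) + 4*(e*e*e)"
          by (simp add: algebra_simps)
        then show ?thesis using h1 h2 e0 by linarith
      qed
      finally show ?thesis unfolding Z \<Phi>_def by simp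
    qed
    ultimately show "Z \<in> S" by (simp add: S_def)
  qed
  moreover have "dist (\<Phi> Y) (\<Phi> Z) \<le> (1/2) * dist Y Z" if "Y \<in> S" "Z \<in> S" for Y Z
  proof -
    have Yle: "norm Y \<le> 2 * e" and Zle: "norm Z \<le> 2 * e" using that by (auto simp: S_def)
    let ?D = "Y - Z"
    have "\<Phi> Y - \<Phi> Z = - ((1/2) *\<^sub>R (?D ** E + E ** ?D + (Y ** ?D + ?D ** Z) + (Y ** E ** ?D + ?D ** E ** Z)))"
      unfolding \<Phi>_def
      by (simp add: matrix_diff_ldistrib matrix_diff_rdistrib matrix_mul_assoc algebra_simps)
    then have "norm (\<Phi> Y - \<Phi> Z) = (1/2) * norm (?D ** E + E ** ?D + (Y ** ?D + ?D ** Z) + (Y ** E ** ?D + ?D ** E ** Z))"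
      by simp
    also have "\<dots> \<le> (1/2) * (norm ?D * e + e * norm ?D + (2*e * norm ?D + norm ?D * (2*e)) + (2*e*e * norm ?D + norm ?D * e * (2*e)))"
    proof -
      have a: "norm (?D ** E) \<le> norm ?D * e" by (rule order_trans[OF frob_mul mult_left_mono[OF Ele norm_ge_zero]])
      have b: "norm (E ** ?D) \<le> e * norm ?D" by (rule order_trans[OF frob_mul mult_right_mono[OF Ele norm_ge_zero]])
      have c: "norm (Y ** ?D) \<le> 2*e * norm ?D" by (rule order_trans[OF frob_mul mult_right_mono[OF Yle norm_ge_zero]])
      have d: "norm (?D ** Z) \<le> norm ?D * (2*e)" by (rule order_trans[OF frob_mul mult_left_mono[OF Zle norm_ge_zero]])
      have ye: "norm (Y ** E) \<le> 2*e*e"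
        by (rule order_trans[OF frob_mul mult_mono[OF Yle Ele]]) (use e0 in auto)
      have f: "norm (Y ** E ** ?D) \<le> 2*e*e * norm ?D"
        by (rule order_trans[OF frob_mul mult_right_mono[OF ye norm_ge_zero]])
      have g: "norm (?D ** E ** Z) \<le> norm ?D * e * (2*e)"
        by (rule order_trans[OF frob_mul mult_mono[OF a Zle]]) (use e0 in auto)
      show ?thesis
        by (intro mult_left_mono norm_triangle_le add_mono a b c d f g) auto
    qed
    also have "\<dots> = (3 * e + 2 * e * e) * norm ?D" by (simp add: algebra_simps)
    also have "\<dots> \<le> (1/2) * norm ?D"
    proof (rule mult_right_mono)
      have "e * e \<le> e * (1/16)" using e e0 by (intro mult_left_mono) auto
      then show "3 * e + 2 * e * e \<le> 1/2" using e by linarith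
    qed simp
    finally show ?thesis by (simp add: dist_norm)
  qed
  ultimately obtain Y where Y: "Y \<in> S" "\<Phi> Y = Y"
    using Banach_fix[of S "1/2" \<Phi>] by auto
  have key: "2 *\<^sub>R Y + (E + Y ** E + E ** Y + Y ** Y + Y ** E ** Y) = 0"
  proof -
    have "2 *\<^sub>R Y = 2 *\<^sub>R \<Phi> Y" using Y by simp
    also have "\<dots> = - (E + Y ** E + E ** Y + Y ** Y + Y ** E ** Y)" by (simp add: \<Phi>_def)
    finally show ?thesis by (simp add: algebra_simps)
  qed
  have "(mat 1 + Y) ** (mat 1 + E) ** (mat 1 + Y) = mat 1 + (2 *\<^sub>R Y + (E + Y ** E + E ** Y + Y ** Y + Y ** E ** Y))"
    by (simp add: matrix_add_ldistrib matrix_add_rdistrib matrix_mul_assoc algebra_simps scaleR_2)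
  then have "(mat 1 + Y) ** (mat 1 + E) ** (mat 1 + Y) = mat 1" using key by simp
  then show ?thesis using Y by (auto simp: S_def)
qed


definition sinv :: "real^('n::finite+'n)^('n+'n) \<Rightarrow> real^('n+'n)^('n+'n)" where
  "sinv S = - (Omega ** transpose S ** Omega)"

lemma symp_right_inv: assumes "symplectic S" shows "S ** sinv S = mat 1"
proof -
  have "S ** sinv S = - ((S ** Omega ** transpose S) ** Omega)"
    by (simp add: sinv_def matrix_neg_right matrix_mul_assoc)
  also have "\<dots> = mat 1" using assms by (simp add: symplectic_def Omega_sq)
  finally show ?thesis .
qed

lemma symp_left_inv: assumes "symplectic S" shows "sinv S ** S = mat 1"
  using symp_right_inv[OF assms] matrix_left_right_inverse by blast

lemma symp_tOt: assumes "symplectic S" shows "transpose S ** Omega ** S = Omega"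
proof -
  have "Omega = Omega ** (sinv S ** S)" using symp_left_inv[OF assms] by simp
  also have "\<dots> = - ((Omega ** Omega) ** (transpose S ** Omega ** S))"
    by (simp add: sinv_def matrix_neg_right matrix_neg_left matrix_mul_assoc)
  also have "\<dots> = transpose S ** Omega ** S" by (simp add: Omega_sq matrix_neg_left)
  finally show ?thesis by simp
qed

lemma matrix_inv_eq: assumes "(A::real^'n^'n) ** B = mat 1" shows "matrix_inv A = B"
proof -
  have BA: "B ** A = mat 1" using assms matrix_left_right_inverse by blast
  have "\<exists>A'. A ** A' = mat 1 \<and> A' ** A = mat 1" using assms BA by blast
  then have inv: "A ** matrix_inv A = mat 1 \<and> matrix_inv A ** A = mat 1"
    unfolding matrix_inv_def by (rule someI_ex)
  have "matrix_inv A = matrix_inv A ** (A ** B)" using assms by simp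
  also have "\<dots> = B" using inv by (simp add: matrix_mul_assoc)
  finally show ?thesis .
qed

lemma symp_mult: assumes "symplectic A" "symplectic B" shows "symplectic (A ** B)"
proof -
  have "A ** B ** Omega ** transpose (A ** B) = A ** (B ** Omega ** transpose B) ** transpose A"
    by (simp add: matrix_transpose_mul matrix_mul_assoc)
  also have "\<dots> = Omega" using assms by (simp add: symplectic_def)
  finally show ?thesis by (simp add: symplectic_def)
qed

lemma symp_transpose: assumes "symplectic S" shows "symplectic (transpose S)"
  using symp_tOt[OF assms] by (simp add: symplectic_def)

lemma symp_Omega: "symplectic (Omega :: real^('n::finite+'n)^('n+'n))"
  by (simp add: symplectic_def Omega_transpose matrix_neg_right Omega_sq matrix_neg_left)

lemma symp_neg: assumes "symplectic S" shows "symplectic (- S)"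
  using assms by (simp add: symplectic_def transpose_neg matrix_neg_left matrix_neg_right)

lemma symp_sinv: assumes "symplectic S" shows "symplectic (sinv S)"
  unfolding sinv_def
  by (intro symp_neg symp_mult symp_Omega symp_transpose assms)

lemma opn_sinv: fixes S :: "real^('n::finite+'n)^('n+'n)" shows "opn (sinv S) \<le> opn S"
proof -
  let ?O = "Omega :: real^('n+'n)^('n+'n)"
  have "opn (sinv S) = opn (?O ** transpose S ** ?O)" by (simp add: sinv_def opn_neg)
  also have "\<dots> \<le> opn (?O ** transpose S) * opn ?O" by (rule opn_mul)
  also have "\<dots> \<le> opn (?O ** transpose S) * 1" by (intro mult_left_mono Omega_opn opn_nonneg)
  also have "\<dots> \<le> (opn ?O * opn (transpose S)) * 1" by (simp add: opn_mul)
  also have "\<dots> \<le> (1 * opn (transpose S)) * 1" by (intro mult_right_mono Omega_opn opn_nonneg) simp_all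
  finally show ?thesis by (simp add: opn_transpose)
qed

lemma opn_mat1: "1 \<le> opn (mat 1 :: real^'n^'n)"
  using opn_mv[of "mat 1 :: real^'n^'n" "axis undefined 1"] by simp

lemma symp_opn_ge1: assumes "symplectic S" shows "1 \<le> opn S"
proof -
  have "1 \<le> opn (S ** sinv S)" using symp_right_inv[OF assms] opn_mat1 by simp
  also have "\<dots> \<le> opn S * opn (sinv S)" by (rule opn_mul)
  also have "\<dots> \<le> opn S * opn S" by (intro mult_left_mono opn_sinv opn_nonneg)
  finally have "1 \<le> opn S * opn S" .
  show ?thesis
  proof (rule ccontr)
    assume "\<not> 1 \<le> opn S"
    then have "opn S * opn S \<le> opn S * 1" using opn_nonneg[of S] by (intro mult_left_mono) auto
    then show False using \<open>1 \<le> opn S * opn S\<close> \<open>\<not> 1 \<le> opn S\<close> by linarith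
  qed
qed


lemmas msimps = matrix_add_ldistrib matrix_add_rdistrib matrix_diff_ldistrib matrix_diff_rdistrib
  matrix_neg_left matrix_neg_right matrix_scaleR_left matrix_scaleR_right matrix_mul_assoc

lemma OO_right[simp]: "(A ** Omega) ** (Omega :: real^('n::finite+'n)^('n+'n)) = - A"
  by (simp add: matrix_mul_assoc[symmetric] Omega_sq matrix_neg_right)
lemma OO_left[simp]: "(Omega :: real^('n::finite+'n)^('n+'n)) ** (Omega ** A) = - A"
  by (simp add: matrix_mul_assoc Omega_sq matrix_neg_left)
lemma OO[simp]: "(Omega :: real^('n::finite+'n)^('n+'n)) ** Omega = - mat 1"
  by (rule Omega_sq)

lemma orth_lemma:
  fixes T :: "real^('n::finite+'n)^('n+'n)"
  assumes symp: "symplectic T" and tau: "opn T \<le> \<tau>"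
    and Cle: "norm (Omega ** T - T ** Omega) \<le> \<gamma>" and g1: "\<gamma> \<le> 1"
    and small: "2*\<tau>*\<gamma> + \<gamma>/4 \<le> 1/16"
  shows "\<exists>Q. symplectic Q \<and> orthogonal_matrix Q \<and> norm (T - Q) \<le> \<gamma>/2 + (\<tau>+1) * (2*(2*\<tau>*\<gamma> + \<gamma>/4))"
proof -
  let ?O = "Omega :: real^('n+'n)^('n+'n)"
  define C where "C = ?O ** T - T ** ?O"
  have g0: "0 \<le> \<gamma>" using Cle norm_ge_zero order_trans by blast
  have t0: "0 \<le> \<tau>" using tau opn_nonneg order_trans by blast
  have tOt: "transpose T ** ?O ** T = ?O" by (rule symp_tOt[OF symp])
  have TT: "transpose T ** T = mat 1 + transpose T ** C ** ?O"
  proof -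
    have "transpose T ** C ** ?O = (transpose T ** ?O ** T) ** ?O - (transpose T ** T ** ?O) ** ?O"
      by (simp add: C_def matrix_diff_ldistrib matrix_diff_rdistrib matrix_mul_assoc matrix_neg_left)
    also have "\<dots> = - mat 1 + transpose T ** T" by (simp add: tOt)
    finally show ?thesis by simp
  qed
  define D where "D = - ((1/2) *\<^sub>R (C ** ?O))"
  define X0 where "X0 = T + D"
  have OCO: "?O ** C ** ?O = C"
    by (simp add: C_def matrix_diff_ldistrib matrix_diff_rdistrib matrix_mul_assoc matrix_neg_left)
  have X0comm: "?O ** X0 = X0 ** ?O"
  proof -
    have "?O ** X0 = ?O ** T - (1/2) *\<^sub>R (?O ** C ** ?O)"
      by (simp add: X0_def D_def msimps)
    also have "\<dots> = ?O ** T - (1/2) *\<^sub>R C" by (simp add: OCO)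
    also have "\<dots> = T ** ?O + (C - (1/2) *\<^sub>R C)" by (simp add: C_def)
    also have "C - (1/2) *\<^sub>R C = (1 - 1/2) *\<^sub>R C" by (simp add: scaleR_diff_left)
    also have "T ** ?O + (1 - 1/2) *\<^sub>R C = T ** ?O + (1/2) *\<^sub>R C" by simp
    also have "\<dots> = X0 ** ?O"
      by (simp add: X0_def D_def msimps)
    finally show ?thesis .
  qed
  have Dle: "norm D \<le> \<gamma>/2"
  proof -
    have "norm D = (1/2) * norm (C ** ?O)" by (simp add: D_def)
    also have "\<dots> \<le> (1/2) * norm C" by (intro mult_left_mono frob_Omega_right) simp
    finally show ?thesis using Cle C_def by simp
  qed
  define E where "E = transpose X0 ** X0 - mat 1"
  have Eexp: "E = transpose T ** C ** ?O + transpose T ** D + transpose D ** T + transpose D ** D"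
    unfolding E_def X0_def
    by (simp add: transpose_add matrix_add_ldistrib matrix_add_rdistrib TT algebra_simps)
  have opnTt: "opn (transpose T) \<le> \<tau>" using tau by (simp add: opn_transpose)
  have Ele: "norm E \<le> 2*\<tau>*\<gamma> + \<gamma>/4"
  proof -
    have a: "norm (transpose T ** C ** ?O) \<le> \<tau> * \<gamma>"
      by (rule order_trans[OF frob_Omega_right order_trans[OF frob_mul_left mult_mono[OF opnTt]]])
         (use Cle C_def t0 in auto)
    have b: "norm (transpose T ** D) \<le> \<tau> * (\<gamma>/2)"
      by (rule order_trans[OF frob_mul_left mult_mono[OF opnTt Dle]]) (use t0 in auto)
    have c: "norm (transpose D ** T) \<le> (\<gamma>/2) * \<tau>"
      by (rule order_trans[OF frob_mul_right mult_mono[OF _ tau]]) (use Dle t0 g0 opn_nonneg[of T] in \<open>auto simp: frob_transpose\<close>)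
    have d: "norm (transpose D ** D) \<le> (\<gamma>/2) * (\<gamma>/2)"
      by (rule order_trans[OF frob_mul mult_mono]) (use Dle g0 in \<open>auto simp: frob_transpose\<close>)
    have "(\<gamma>/2) * (\<gamma>/2) \<le> \<gamma>/4" using g0 g1 using mult_left_mono[of \<gamma> 1 \<gamma>] by simp
    have "norm E \<le> \<tau> * \<gamma> + \<tau> * (\<gamma>/2) + (\<gamma>/2) * \<tau> + (\<gamma>/2) * (\<gamma>/2)"
      unfolding Eexp by (intro norm_triangle_le add_mono a b c d)
    also have "\<dots> \<le> 2*\<tau>*\<gamma> + \<gamma>/4" using \<open>(\<gamma>/2) * (\<gamma>/2) \<le> \<gamma>/4\<close> by (simp add: algebra_simps)
    finally show ?thesis .
  qed
  have Esym: "transpose E = E"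
    by (simp add: E_def transpose_diff matrix_transpose_mul)
  have X0tcomm: "?O ** transpose X0 = transpose X0 ** ?O"
  proof -
    have "transpose (?O ** X0) = transpose (X0 ** ?O)" using X0comm by simp
    then have "- (transpose X0 ** ?O) = - (?O ** transpose X0)"
      by (simp add: matrix_transpose_mul Omega_transpose matrix_neg_left matrix_neg_right)
    then show ?thesis by simp
  qed
  have Ecomm: "?O ** E = E ** ?O"
    unfolding E_def by (intro comm_diff comm_mul X0comm X0tcomm) simp
  obtain Y where Ysym: "transpose Y = Y" and Ycomm: "?O ** Y = Y ** ?O" and Yle: "norm Y \<le> 2 * (2*\<tau>*\<gamma> + \<gamma>/4)"
    and Yeq: "(mat 1 + Y) ** (mat 1 + E) ** (mat 1 + Y) = mat 1"
    using fix_lemma[OF Esym Ecomm Ele small] by blast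
  define Q where "Q = X0 ** (mat 1 + Y)"
  have QtQ: "transpose Q ** Q = mat 1"
  proof -
    have "transpose Q ** Q = (mat 1 + Y) ** (transpose X0 ** X0) ** (mat 1 + Y)"
      by (simp add: Q_def matrix_transpose_mul transpose_add Ysym matrix_mul_assoc)
    also have "transpose X0 ** X0 = mat 1 + E" by (simp add: E_def)
    finally show ?thesis using Yeq by simp
  qed
  have orth: "orthogonal_matrix Q" using QtQ by (simp add: orthogonal_matrix)
  have QQt: "Q ** transpose Q = mat 1" using QtQ matrix_left_right_inverse by blast
  have Qcomm: "?O ** Q = Q ** ?O"
    unfolding Q_def by (intro comm_mul comm_add X0comm Ycomm) simp
  have sympQ: "symplectic Q"
  proof -
    have "Q ** ?O ** transpose Q = ?O ** (Q ** transpose Q)" by (simp add: Qcomm matrix_mul_assoc)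
    then show ?thesis by (simp add: symplectic_def QQt)
  qed
  have "T - Q = - D - X0 ** Y"
    by (simp add: Q_def X0_def matrix_add_ldistrib algebra_simps)
  then have "norm (T - Q) \<le> norm D + norm (X0 ** Y)"
    by (metis norm_minus_cancel norm_triangle_ineq4)
  also have "\<dots> \<le> \<gamma>/2 + (\<tau>+1) * (2*(2*\<tau>*\<gamma> + \<gamma>/4))"
  proof (rule add_mono[OF Dle])
    have "opn X0 \<le> opn T + opn D" unfolding X0_def by (rule opn_add)
    also have "\<dots> \<le> \<tau> + 1" using tau Dle g1 opn_le_frob[of D] by linarith
    finally have x: "opn X0 \<le> \<tau> + 1" .
    show "norm (X0 ** Y) \<le> (\<tau>+1) * (2*(2*\<tau>*\<gamma> + \<gamma>/4))"
      by (rule order_trans[OF frob_mul_left mult_mono[OF x Yle]]) (use t0 in auto)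
  qed
  finally show ?thesis using sympQ orth by blast
qed




lemma row_le_opn: "norm ((A::real^'n^'m) $ i) \<le> opn A"
proof -
  have "A $ i = transpose A *v axis i 1"
    by (simp add: vec_eq_iff matrix_vector_mult_def transpose_def axis_def if_distrib if_distribR cong: if_cong)
  then show ?thesis using opn_mv[of "transpose A" "axis i 1"] by (simp add: opn_transpose)
qed

lemma row_lower:
  fixes T :: "real^('n::finite+'n)^('n+'n)"
  assumes "symplectic T"
  shows "1 \<le> opn T * norm (T $ i)"
proof -
  have r: "T $ i = transpose T *v axis i 1"
    by (simp add: vec_eq_iff matrix_vector_mult_def transpose_def axis_def if_distrib if_distribR cong: if_cong)
  have "transpose (sinv T) ** transpose T = mat 1"
    using symp_right_inv[OF assms] by (metis matrix_transpose_mul transpose_mat)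
  then have "transpose (sinv T) *v (transpose T *v axis i 1) = axis i 1"
    by (simp only: matrix_vector_mul_assoc matrix_vector_mul_lid)
  then have "axis i 1 = transpose (sinv T) *v (T $ i)"
    by (simp only: r)
  then have "norm (axis i (1::real)) \<le> opn (transpose (sinv T)) * norm (T $ i)"
    by (metis opn_mv)
  also have "\<dots> \<le> opn T * norm (T $ i)"
    by (intro mult_right_mono) (simp_all add: opn_transpose opn_sinv)
  finally show ?thesis by simp
qed

lemma cluster_row:
  fixes t e w :: "real^'m"
  assumes eq: "\<And>j. t $ j * w $ j = \<epsilon> * e $ j"
    and tn: "t \<noteq> 0"
    and dl: "\<epsilon> * norm e \<le> \<delta> * norm t"
    and d0: "0 \<le> \<delta>" and e0: "0 \<le> \<epsilon>"
  shows "\<exists>j. \<bar>w $ j\<bar> \<le> \<delta>"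
proof (rule ccontr)
  assume "\<not> (\<exists>j. \<bar>w $ j\<bar> \<le> \<delta>)"
  then have gt: "\<And>j. \<delta> < \<bar>w $ j\<bar>" using not_le by blast
  obtain j0 where j0: "t $ j0 \<noteq> 0" using tn by (auto simp: vec_eq_iff)
  have "(\<Sum>j\<in>UNIV. (t $ j)^2 * \<delta>^2) < (\<Sum>j\<in>UNIV. (t $ j)^2 * (w $ j)^2)"
  proof (rule sum_strict_mono_ex1)
    show "\<forall>j\<in>UNIV. (t $ j)^2 * \<delta>^2 \<le> (t $ j)^2 * (w $ j)^2"
    proof
      fix j
      have "\<delta>^2 \<le> (w $ j)^2" using power_mono[OF less_imp_le[OF gt[of j]] d0, of 2] by simp
      then show "(t $ j)^2 * \<delta>^2 \<le> (t $ j)^2 * (w $ j)^2" by (intro mult_left_mono) auto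
    qed
    have "\<delta>^2 < (w $ j0)^2" using power_strict_mono[OF gt[of j0] d0, of 2] by simp
    then show "\<exists>j\<in>UNIV. (t $ j)^2 * \<delta>^2 < (t $ j)^2 * (w $ j)^2"
      using j0 by (intro bexI[of _ j0]) (auto intro!: mult_strict_left_mono)
  qed simp
  also have "\<dots> = (\<Sum>j\<in>UNIV. (\<epsilon> * e $ j)^2)"
    by (intro sum.cong refl) (metis eq power_mult_distrib)
  also have "\<dots> = (\<epsilon> * norm e)^2" by (simp add: norm_sq_vec power_mult_distrib sum_distrib_left)
  also have "\<dots> \<le> (\<delta> * norm t)^2"
    using dl e0 by (intro power_mono) auto
  also have "\<dots> = (\<Sum>j\<in>UNIV. (t $ j)^2 * \<delta>^2)" by (simp add: norm_sq_vec power_mult_distrib sum_distrib_left mult.commute)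
  finally show False by simp
qed

lemma halfint_gap:
  fixes x y :: nat
  assumes "x \<noteq> y"
  shows "2 \<le> \<bar>(1/2 + real x)^2 - (1/2 + real y)^2\<bar>"
proof -
  have e: "(1/2 + real x)^2 - (1/2 + real y)^2 = (real x - real y) * (1 + real x + real y)"
    by (simp add: power2_eq_square algebra_simps)
  have "1 \<le> \<bar>real x - real y\<bar>" using assms by (cases "x < y") auto
  moreover have "2 \<le> 1 + real x + real y" using assms by (cases x; cases y) auto
  ultimately have "1 * 2 \<le> \<bar>real x - real y\<bar> * (1 + real x + real y)"
    by (intro mult_mono) auto
  then show ?thesis unfolding e by (simp add: abs_mult)
qed


lemma opn_mul_le: "opn A \<le> a \<Longrightarrow> opn B \<le> b \<Longrightarrow> opn ((A::real^'n^'m) ** B) \<le> a * b"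
  by (rule order_trans[OF opn_mul mult_mono]) (auto intro: opn_nonneg order_trans[OF opn_nonneg])
lemma frob_mul_left_le: "opn A \<le> a \<Longrightarrow> norm B \<le> b \<Longrightarrow> norm ((A::real^'n^'m) ** B) \<le> a * b"
  by (rule order_trans[OF frob_mul_left mult_mono]) (auto intro: order_trans[OF opn_nonneg])
lemma frob_mul_right_le: "norm A \<le> a \<Longrightarrow> opn B \<le> b \<Longrightarrow> norm ((A::real^'n^'m) ** B) \<le> a * b"
  by (rule order_trans[OF frob_mul_right mult_mono]) (auto intro: opn_nonneg order_trans[OF norm_ge_zero])

lemma powL: "1 \<le> (L::real) \<Longrightarrow> a \<le> b \<Longrightarrow> L ^ a \<le> L ^ b"
  by (rule power_increasing)

lemma comm_lemma:
  fixes T G :: "real^('n::finite+'n)^('n+'n)" and f :: "'n \<Rightarrow> nat" and d' :: "real^'n" and \<epsilon> L :: real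
  defines "k \<equiv> (\<chi> a. 1/2 + real (f a)) :: real^'n"
  assumes symp: "symplectic T"
    and Keq: "diag2 d' = T ** diag2 k ** transpose T + \<epsilon> *\<^sub>R G"
    and dpos: "\<And>a. 1/2 \<le> d' $ a"
    and e0: "0 \<le> \<epsilon>" and L1: "1 \<le> L"
    and bT: "opn T \<le> 2*L" and bK: "opn (diag2 k) \<le> L" and bK': "opn (diag2 d') \<le> 2*L^2"
    and bG: "opn G \<le> 2*L"
    and s1: "24*L^5*\<epsilon> \<le> 1/2" and s2: "12*L^4* sqrt (real CARD('n+'n))*\<epsilon> \<le> 1"
  shows "norm (Omega ** T - T ** Omega) \<le> 248 * L^6 * sqrt (real CARD('n+'n)) * \<epsilon>"
proof -
  let ?O = "Omega :: real^('n+'n)^('n+'n)"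
  let ?K = "diag2 k" and ?K' = "diag2 d'"
  define sN where "sN = sqrt (real CARD('n+'n))"
  have c1: "0 < CARD('n)" by (rule finite_UNIV_card_ge_0) simp
  have c1': "(1::real) \<le> real CARD('n)" by (metis One_nat_def Suc_leI c1 of_nat_le_iff of_nat_1)
  have sN1: "1 \<le> sN" unfolding sN_def by simp (use c1' in linarith)
  have L0: "0 \<le> L" using L1 by simp
  have bO: "opn ?O \<le> 1" by (rule Omega_opn)
  define E1 where "E1 = G ** ?O ** T"
  have tOt: "transpose T ** ?O ** T = ?O" by (rule symp_tOt[OF symp])
  have eq1: "?K' ** ?O ** T = T ** ?K ** ?O + \<epsilon> *\<^sub>R E1"
  proof -
    have "?K' ** ?O ** T = (T ** ?K) ** (transpose T ** ?O ** T) + \<epsilon> *\<^sub>R (G ** ?O ** T)"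
      by (simp add: Keq msimps)
    then show ?thesis by (simp add: tOt E1_def)
  qed
  define E2 where "E2 = E1 ** ?K ** ?O + ?K' ** ?O ** E1"
  have KO: "?K ** ?O = ?O ** ?K" and K'O: "?K' ** ?O = ?O ** ?K'" by (simp_all add: diag2_Omega)
  have KOKO: "?K ** ?O ** ?K ** ?O = - (?K ** ?K)"
  proof -
    have "?K ** ?O ** ?K ** ?O = ?K ** (?O ** ?K) ** ?O" by (simp add: matrix_mul_assoc)
    also have "\<dots> = - (?K ** ?K)" by (simp add: KO[symmetric] matrix_mul_assoc)
    finally show ?thesis .
  qed
  have K'OK'O: "?K' ** ?O ** ?K' ** ?O = - (?K' ** ?K')"
  proof -
    have "?K' ** ?O ** ?K' ** ?O = ?K' ** (?O ** ?K') ** ?O" by (simp add: matrix_mul_assoc)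
    also have "\<dots> = - (?K' ** ?K')" by (simp add: K'O[symmetric] matrix_mul_assoc)
    finally show ?thesis .
  qed
  have eq2: "T ** ?K ** ?K - ?K' ** ?K' ** T = \<epsilon> *\<^sub>R E2"
  proof -
    have "?K' ** ?O ** ?K' ** ?O ** T = (?K' ** ?O) ** (?K' ** ?O ** T)" by (simp add: matrix_mul_assoc)
    also have "\<dots> = (?K' ** ?O ** T) ** ?K ** ?O + \<epsilon> *\<^sub>R (?K' ** ?O ** E1)"
      by (simp add: eq1 msimps)
    also have "\<dots> = T ** ?K ** ?O ** ?K ** ?O + \<epsilon> *\<^sub>R E2"
      by (simp add: eq1 E2_def msimps scaleR_add_right)
    also have "T ** ?K ** ?O ** ?K ** ?O = T ** (?K ** ?O ** ?K ** ?O)" by (simp add: matrix_mul_assoc)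
    finally have "(?K' ** ?O ** ?K' ** ?O) ** T = T ** (?K ** ?O ** ?K ** ?O) + \<epsilon> *\<^sub>R E2" .
    then have "- (?K' ** ?K' ** T) = - (T ** ?K ** ?K) + \<epsilon> *\<^sub>R E2"
      by (simp add: KOKO K'OK'O matrix_neg_left matrix_neg_right matrix_mul_assoc)
    then show ?thesis by (simp add: algebra_simps)
  qed
  have eqe: "T $ i $ j * (k $ idx j * k $ idx j - d' $ idx i * d' $ idx i) = \<epsilon> * E2 $ i $ j" for i j
  proof -
    have "(T ** ?K ** ?K - ?K' ** (?K' ** T)) $ i $ j = (\<epsilon> *\<^sub>R E2) $ i $ j"
      using eq2 by (simp add: matrix_mul_assoc)
    then show ?thesis by (simp add: diag2_mul_left diag2_mul_right algebra_simps)
  qed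
  have bE1: "opn E1 \<le> 4 * L^2"
  proof -
    have "opn E1 \<le> (2*L) * 1 * (2*L)" unfolding E1_def by (intro opn_mul_le bG bO bT)
    then show ?thesis by (simp add: power2_eq_square)
  qed
  have bE2: "opn E2 \<le> 12 * L^4"
  proof -
    have "opn E2 \<le> 4*L^2 * L * 1 + 2*L^2 * 1 * (4*L^2)"
      unfolding E2_def by (intro order_trans[OF opn_add] add_mono opn_mul_le bE1 bK bO bK')
    also have "\<dots> \<le> 12 * L^4"
    proof -
      have "L^3 \<le> L^4" using powL[OF L1, of 3 4] by simp
      moreover have "4*L^2 * L * 1 + 2*L^2 * 1 * (4*L^2) = 4*L^3 + 8*L^4"
        by (simp add: eval_nat_numeral algebra_simps)
      ultimately show ?thesis by linarith
    qed
    finally show ?thesis .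
  qed
  define \<delta> where "\<delta> = 24 * L^5 * \<epsilon>"
  have d0: "0 \<le> \<delta>" using e0 L0 by (simp add: \<delta>_def)
  have dhalf: "\<delta> \<le> 1/2" using s1 by (simp add: \<delta>_def)
  have cluster: "\<exists>j. \<bar>k $ idx j * k $ idx j - d' $ idx i * d' $ idx i\<bar> \<le> \<delta>" for i
  proof -
    have r: "1 \<le> opn T * norm (T $ i)" by (rule row_lower[OF symp])
    have tn: "T $ i \<noteq> 0" using r by auto
    have "\<epsilon> * norm (E2 $ i) \<le> \<epsilon> * (12 * L^4)"
      by (intro mult_left_mono e0 order_trans[OF row_le_opn bE2])
    also have "\<dots> \<le> \<epsilon> * (12 * L^4) * (opn T * norm (T $ i))"
      using mult_left_mono[OF r, of "\<epsilon> * (12 * L^4)"] e0 L0 by simp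
    also have "\<dots> \<le> \<epsilon> * (12 * L^4) * (2 * L * norm (T $ i))"
      using e0 L0 bT by (intro mult_left_mono mult_right_mono) auto
    also have "\<dots> = \<delta> * norm (T $ i)" by (simp add: \<delta>_def power_Suc algebra_simps eval_nat_numeral)
    finally have dl: "\<epsilon> * norm (E2 $ i) \<le> \<delta> * norm (T $ i)" .
    have "\<exists>j. \<bar>(\<chi> j. k $ idx j * k $ idx j - d' $ idx i * d' $ idx i) $ j\<bar> \<le> \<delta>"
      by (rule cluster_row[OF _ tn dl d0 e0]) (simp add: eqe)
    then show ?thesis by simp
  qed
  define \<nu> where "\<nu> a = (SOME v. (\<exists>b. v = k $ b) \<and> \<bar>v * v - d' $ a * d' $ a\<bar> \<le> \<delta>)" for a
  have nu: "(\<exists>b. \<nu> a = k $ b) \<and> \<bar>\<nu> a * \<nu> a - d' $ a * d' $ a\<bar> \<le> \<delta>" for a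
  proof -
    obtain j where "\<bar>k $ idx j * k $ idx j - d' $ idx (Inl a) * d' $ idx (Inl a)\<bar> \<le> \<delta>"
      using cluster by blast
    then have "\<exists>v. (\<exists>b. v = k $ b) \<and> \<bar>v * v - d' $ a * d' $ a\<bar> \<le> \<delta>" by auto
    then show ?thesis unfolding \<nu>_def by (rule someI_ex)
  qed
  have nu_ge: "1/2 \<le> \<nu> a" for a using nu[of a] by (auto simp: k_def)
  have close: "\<bar>d' $ a - \<nu> a\<bar> \<le> \<delta>" for a
  proof -
    have "\<bar>d' $ a - \<nu> a\<bar> * 1 \<le> \<bar>d' $ a - \<nu> a\<bar> * (d' $ a + \<nu> a)"
      using dpos[of a] nu_ge[of a] by (intro mult_left_mono) auto
    also have "\<dots> = \<bar>\<nu> a * \<nu> a - d' $ a * d' $ a\<bar>"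
    proof -
      have "\<nu> a * \<nu> a - d' $ a * d' $ a = (\<nu> a - d' $ a) * (d' $ a + \<nu> a)" by (simp add: algebra_simps)
      then have "\<bar>\<nu> a * \<nu> a - d' $ a * d' $ a\<bar> = \<bar>\<nu> a - d' $ a\<bar> * (d' $ a + \<nu> a)"
        using dpos[of a] nu_ge[of a] by (simp add: abs_mult)
      then show ?thesis by (simp add: abs_minus_commute)
    qed
    finally show ?thesis using nu[of a] by simp
  qed
  have gap: "1 \<le> \<bar>k $ b * k $ b - d' $ a * d' $ a\<bar>" if "k $ b \<noteq> \<nu> a" for a b
  proof -
    obtain b0 where b0: "\<nu> a = k $ b0" using nu[of a] by blast
    have "f b \<noteq> f b0" using that b0 by (auto simp: k_def)
    then have "2 \<le> \<bar>(1/2 + real (f b))^2 - (1/2 + real (f b0))^2\<bar>" by (rule halfint_gap)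
    then have "2 \<le> \<bar>k $ b * k $ b - \<nu> a * \<nu> a\<bar>" by (simp add: b0 k_def power2_eq_square)
    then show ?thesis using nu[of a] dhalf by linarith
  qed
  define T0 where "T0 = (\<chi> i j. if k $ idx j = \<nu> (idx i) then T $ i $ j else 0)"
  define \<Delta> where "\<Delta> = T - T0"
  define \<eta> where "\<eta> = 12 * L^4 * sN * \<epsilon>"
  have Dentry: "\<bar>\<Delta> $ i $ j\<bar> \<le> \<bar>(\<epsilon> *\<^sub>R E2) $ i $ j\<bar>" for i j
  proof (cases "k $ idx j = \<nu> (idx i)")
    case True then show ?thesis by (simp add: \<Delta>_def T0_def)
  next
    case False
    have g: "1 \<le> \<bar>k $ idx j * k $ idx j - d' $ idx i * d' $ idx i\<bar>" using gap[OF False] .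
    have "\<bar>T $ i $ j\<bar> * 1 \<le> \<bar>T $ i $ j\<bar> * \<bar>k $ idx j * k $ idx j - d' $ idx i * d' $ idx i\<bar>"
      by (intro mult_left_mono g) simp
    also have "\<dots> = \<bar>\<epsilon> * E2 $ i $ j\<bar>" by (simp add: abs_mult[symmetric] eqe)
    finally show ?thesis using False by (simp add: \<Delta>_def T0_def)
  qed
  have bD: "norm \<Delta> \<le> \<eta>"
  proof -
    have "norm \<Delta> \<le> norm (\<epsilon> *\<^sub>R E2)" by (rule frob_mono[OF Dentry])
    also have "\<dots> = \<epsilon> * norm E2" using e0 by simp
    also have "\<dots> \<le> \<epsilon> * (sN * opn E2)" unfolding sN_def by (intro mult_left_mono frob_le_opn e0)
    also have "\<dots> \<le> \<epsilon> * (sN * (12 * L^4))" using sN1 e0 by (intro mult_left_mono bE2) auto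
    finally show ?thesis by (simp add: \<eta>_def algebra_simps)
  qed
  have eta1: "\<eta> \<le> 1" using s2 by (simp add: \<eta>_def sN_def)
  define M where "M = diag2 (\<chi> a. \<nu> a)"
  have T0K: "T0 ** ?K = M ** T0"
    by (simp add: vec_eq_iff diag2_mul_left diag2_mul_right M_def T0_def)
  have MO: "M ** ?O = ?O ** M" by (simp add: M_def diag2_Omega)
  have Zeq: "M ** (?O ** T0 - T0 ** ?O) = \<epsilon> *\<^sub>R E1 - ?K' ** ?O ** \<Delta> + \<Delta> ** ?K ** ?O - ?O ** (?K' - M) ** T0"
  proof -
    have a: "?K' ** ?O ** T0 - T0 ** ?K ** ?O = \<epsilon> *\<^sub>R E1 - ?K' ** ?O ** \<Delta> + \<Delta> ** ?K ** ?O"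
    proof -
      have T0e: "T0 = T - \<Delta>" by (simp add: \<Delta>_def)
      have "?K' ** ?O ** T0 - T0 ** ?K ** ?O = (?K' ** ?O ** T - T ** ?K ** ?O) - ?K' ** ?O ** \<Delta> + \<Delta> ** ?K ** ?O"
        unfolding T0e by (simp only: msimps) (simp add: algebra_simps)
      then show ?thesis by (simp add: eq1)
    qed
    have b: "?K' ** ?O ** T0 - T0 ** ?K ** ?O = M ** (?O ** T0 - T0 ** ?O) + ?O ** (?K' - M) ** T0"
    proof -
      have "?K' ** ?O ** T0 = ?O ** M ** T0 + ?O ** (?K' - M) ** T0"
        by (simp add: K'O msimps)
      moreover have "T0 ** ?K ** ?O = M ** T0 ** ?O" by (simp add: T0K)
      moreover have "?O ** M ** T0 = M ** ?O ** T0" by (simp add: MO)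
      ultimately show ?thesis by (simp add: msimps algebra_simps)
    qed
    show ?thesis using a b by (simp add: algebra_simps)
  qed
  have bX: "norm (?O ** T0 - T0 ** ?O) \<le> 2 * norm (M ** (?O ** T0 - T0 ** ?O))"
  proof -
    have "norm (?O ** T0 - T0 ** ?O) \<le> norm (2 *\<^sub>R (M ** (?O ** T0 - T0 ** ?O)))"
    proof (rule frob_mono)
      fix i j
      have "\<bar>(?O ** T0 - T0 ** ?O) $ i $ j\<bar> * 1 \<le> \<bar>(?O ** T0 - T0 ** ?O) $ i $ j\<bar> * (2 * \<nu> (idx i))"
        using nu_ge[of "idx i"] by (intro mult_left_mono) auto
      also have "\<dots> = \<bar>(2 *\<^sub>R (M ** (?O ** T0 - T0 ** ?O))) $ i $ j\<bar>"
        using nu_ge[of "idx i"] by (simp add: M_def diag2_mul_left abs_mult)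
      finally show "\<bar>(?O ** T0 - T0 ** ?O) $ i $ j\<bar> \<le> \<bar>(2 *\<^sub>R (M ** (?O ** T0 - T0 ** ?O))) $ i $ j\<bar>" by simp
    qed
    then show ?thesis by simp
  qed
  have bKM: "norm (?K' - M) \<le> sN * \<delta>"
  proof -
    have "norm (?K' - M) \<le> sN * opn (?K' - M)" unfolding sN_def by (rule frob_le_opn)
    also have "opn (?K' - M) \<le> \<delta>"
      unfolding M_def diag2_diff by (rule opn_diag2) (simp add: close)
    finally show ?thesis using sN1 by simp
  qed
  have bT0: "opn T0 \<le> 2*L + 1"
  proof -
    have "opn T0 \<le> opn T + opn \<Delta>" unfolding \<Delta>_def by (rule opn_diff[of T "T - T0", simplified])
    also have "\<dots> \<le> 2*L + 1" using bT opn_le_frob[of \<Delta>] bD eta1 by linarith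
    finally show ?thesis .
  qed
  have bZ: "norm (M ** (?O ** T0 - T0 ** ?O)) \<le> \<epsilon> * (sN * (4*L^2)) + (2*L^2) * 1 * \<eta> + \<eta> * (L * 1) + 1 * (sN * \<delta>) * (2*L+1)"
  proof -
    have a: "norm (\<epsilon> *\<^sub>R E1) \<le> \<epsilon> * (sN * (4*L^2))"
    proof -
      have "norm E1 \<le> sN * opn E1" unfolding sN_def by (rule frob_le_opn)
      also have "\<dots> \<le> sN * (4*L^2)" using sN1 bE1 by (intro mult_left_mono) auto
      finally show ?thesis using e0 by (simp add: mult_left_mono)
    qed
    have b: "norm (?K' ** ?O ** \<Delta>) \<le> (2*L^2) * 1 * \<eta>" by (intro frob_mul_left_le opn_mul_le bK' bO bD)
    have c: "norm (\<Delta> ** ?K ** ?O) \<le> \<eta> * (L * 1)"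
      by (subst matrix_mul_assoc[symmetric]) (intro frob_mul_right_le opn_mul_le bK bO bD)
    have d: "norm (?O ** (?K' - M) ** T0) \<le> 1 * (sN * \<delta>) * (2*L+1)"
      by (intro frob_mul_right_le frob_mul_left_le bO bKM bT0)
    show ?thesis unfolding Zeq
      by (intro order_trans[OF norm_triangle_ineq4] order_trans[OF norm_triangle_ineq] add_mono a b c d)
  qed
  have bDc: "norm (?O ** \<Delta> - \<Delta> ** ?O) \<le> 2 * \<eta>"
  proof -
    have "norm (?O ** \<Delta> - \<Delta> ** ?O) \<le> norm (?O ** \<Delta>) + norm (\<Delta> ** ?O)" by (rule norm_triangle_ineq4)
    also have "\<dots> \<le> \<eta> + \<eta>" using bD frob_Omega_left[of \<Delta>] frob_Omega_right[of \<Delta>] by linarith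
    finally show ?thesis by simp
  qed
  have "?O ** T - T ** ?O = (?O ** T0 - T0 ** ?O) + (?O ** \<Delta> - \<Delta> ** ?O)"
    by (simp add: \<Delta>_def msimps algebra_simps)
  then have "norm (?O ** T - T ** ?O) \<le> norm (?O ** T0 - T0 ** ?O) + norm (?O ** \<Delta> - \<Delta> ** ?O)"
    by (metis norm_triangle_ineq)
  also have "\<dots> \<le> 2 * (\<epsilon> * (sN * (4*L^2)) + (2*L^2) * 1 * \<eta> + \<eta> * (L * 1) + 1 * (sN * \<delta>) * (2*L+1)) + 2 * \<eta>"
    by (rule add_mono[OF order_trans[OF bX mult_left_mono[OF bZ]] bDc]) simp
  also have "\<dots> \<le> 248 * L^6 * sN * \<epsilon>"
  proof -
    define x where "x = sN * \<epsilon>"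
    have x0: "0 \<le> x" using sN1 e0 by (simp add: x_def)
    have p2: "L^2 * x \<le> L^6 * x" and p4: "L^4 * x \<le> L^6 * x" and p5: "L^5 * x \<le> L^6 * x"
      using powL[OF L1] x0 by (auto intro!: mult_right_mono)
    have "2 * (\<epsilon> * (sN * (4*L^2)) + (2*L^2) * 1 * \<eta> + \<eta> * (L * 1) + 1 * (sN * \<delta>) * (2*L+1)) + 2 * \<eta>
        = 8 * (L^2 * x) + 48 * (L^6 * x) + 24 * (L^5 * x) + 96 * (L^6 * x) + 48 * (L^5 * x) + 24 * (L^4 * x)"
      by (simp add: x_def \<eta>_def \<delta>_def algebra_simps power_Suc eval_nat_numeral)
    also have "\<dots> \<le> 248 * (L^6 * x)" using p2 p4 p5 by linarith
    finally show ?thesis by (simp add: x_def algebra_simps)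
  qed
  finally show ?thesis by (simp add: sN_def)
qed


lemma quad_lower:
  fixes D' :: "real^'n::finite" and y :: "real^('n+'n)"
  assumes "\<And>a. 1/2 \<le> D' $ a"
  shows "(1/2) * norm y ^ 2 \<le> inner y (diag2 D' *v y)"
proof -
  have "(1/2) * norm y ^ 2 = (\<Sum>i\<in>UNIV. (1/2) * (y $ i)^2)" by (simp add: norm_sq_vec sum_distrib_left)
  also have "\<dots> \<le> (\<Sum>i\<in>UNIV. y $ i * (D' $ idx i * y $ i))"
  proof (intro sum_mono)
    fix i
    have "(1/2) * (y $ i)^2 \<le> D' $ idx i * (y $ i)^2" using assms[of "idx i"] by (intro mult_right_mono) auto
    then show "(1/2) * (y $ i)^2 \<le> y $ i * (D' $ idx i * y $ i)" by (simp add: power2_eq_square algebra_simps)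
  qed
  also have "\<dots> = inner y (diag2 D' *v y)" by (simp add: diag2_mv inner_vec_def)
  finally show ?thesis .
qed

lemma opn_R_bound:
  fixes R' :: "real^('n::finite+'n)^('n+'n)" and D' :: "real^'n"
  assumes "\<And>a. 1/2 \<le> D' $ a"
  shows "opn R' ^ 2 \<le> 2 * opn (R' ** diag2 D' ** transpose R')"
proof -
  let ?M = "R' ** diag2 D' ** transpose R'"
  have "opn (transpose R') \<le> sqrt (2 * opn ?M)"
  proof (rule opn_le)
    fix x :: "real^('n+'n)"
    let ?y = "transpose R' *v x"
    have "(1/2) * norm ?y ^ 2 \<le> inner ?y (diag2 D' *v ?y)" by (rule quad_lower[OF assms])
    also have "\<dots> = inner x (R' *v (diag2 D' *v ?y))"
      by (metis dot_lmul_matrix transpose_matrix_vector)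
    also have "\<dots> = inner x (?M *v x)" by (simp only: matrix_vector_mul_assoc matrix_mul_assoc)
    also have "\<dots> \<le> norm x * norm (?M *v x)" by (rule norm_cauchy_schwarz)
    also have "\<dots> \<le> norm x * (opn ?M * norm x)" by (intro mult_left_mono opn_mv) simp
    finally have "norm ?y ^ 2 \<le> (2 * opn ?M) * norm x ^ 2" by (simp add: power2_eq_square algebra_simps)
    then have "sqrt (norm ?y ^ 2) \<le> sqrt ((2 * opn ?M) * norm x ^ 2)" by (rule real_sqrt_le_mono)
    then show "norm ?y \<le> sqrt (2 * opn ?M) * norm x" by (simp add: real_sqrt_mult)
  qed
  then have "opn R' \<le> sqrt (2 * opn ?M)" by (simp add: opn_transpose)
  then have "opn R' ^ 2 \<le> (sqrt (2 * opn ?M)) ^ 2" by (intro power_mono opn_nonneg)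
  also have "\<dots> = 2 * opn ?M" using opn_nonneg[of ?M] by simp
  finally show ?thesis .
qed

lemma mono3:
  fixes a b c :: real
  assumes "1 \<le> a" "1 \<le> b" "1 \<le> c" "i1 \<le> j1" "i2 \<le> j2" "i3 \<le> j3"
  shows "a^i1 * b^i2 * c^i3 \<le> a^j1 * b^j2 * c^j3"
proof -
  have "a^i1 \<le> a^j1" "b^i2 \<le> b^j2" "c^i3 \<le> c^j3" using assms by (auto intro: power_increasing)
  then show ?thesis using assms by (intro mult_mono) (auto intro: mult_nonneg_nonneg)
qed


lemma regime2_arith:
  fixes a sn q \<beta> sN :: real
  assumes a1: "1 \<le> a" and sn1: "1 \<le> sn" and q1: "1 \<le> q" and b0: "0 \<le> \<beta>"
    and small: "\<beta> * (8 * a^13 * sn^3 * q^2) < 1"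
    and sN: "sN \<le> 2 * sn" and sN0: "0 \<le> sN"
  shows "24 * (a^8 * q^2)^5 * \<beta>^8 \<le> 1/2"
    and "12 * (a^8 * q^2)^4 * sN * \<beta>^8 \<le> 1"
    and "17000 * (a^8 * q^2)^7 * sN * \<beta>^8 \<le> 1"
    and "7000 * (a^8 * q^2)^8 * sN * \<beta>^8 \<le> 24 * \<beta> * a^21 * sn^3 * q^3"
proof -
  define X where "X = \<beta> * (8 * a^13 * sn^3 * q^2)"
  have X0: "0 \<le> X" using b0 a1 sn1 q1 by (simp add: X_def)
  have X1: "X < 1" using small by (simp add: X_def)
  define W where "W = a^104 * sn^24 * q^16"
  have W0: "0 \<le> W" using a1 sn1 q1 by (simp add: W_def)
  have "X^8 = 8^8 * (W * \<beta>^8)"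
    by (simp add: X_def W_def power_mult_distrib power_mult[symmetric] algebra_simps)
  moreover have "X^8 \<le> 1" using X0 X1 by (simp add: power_le_one)
  ultimately have Wb: "W * \<beta>^8 \<le> 1 / 8^8" by simp
  have bb: "0 \<le> \<beta>^8" using b0 by simp
  have m1: "(a^8 * q^2)^5 \<le> W"
  proof -
    have "a^40 * sn^0 * q^10 \<le> a^104 * sn^24 * q^16" by (rule mono3) (use a1 sn1 q1 in auto)
    then show ?thesis by (simp add: W_def power_mult_distrib power_mult[symmetric])
  qed
  have m2: "(a^8 * q^2)^4 * sn \<le> W"
  proof -
    have "a^32 * sn^1 * q^8 \<le> a^104 * sn^24 * q^16" by (rule mono3) (use a1 sn1 q1 in auto)
    then show ?thesis by (simp add: W_def power_mult_distrib power_mult[symmetric] algebra_simps)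
  qed
  have m3: "(a^8 * q^2)^7 * sn \<le> W"
  proof -
    have "a^56 * sn^1 * q^14 \<le> a^104 * sn^24 * q^16" by (rule mono3) (use a1 sn1 q1 in auto)
    then show ?thesis by (simp add: W_def power_mult_distrib power_mult[symmetric] algebra_simps)
  qed
  have Lp: "0 \<le> (a^8 * q^2)^k" for k using a1 q1 by simp
  show "24 * (a^8 * q^2)^5 * \<beta>^8 \<le> 1/2"
  proof -
    have "(a^8 * q^2)^5 * \<beta>^8 \<le> W * \<beta>^8" by (intro mult_right_mono m1 bb)
    then show ?thesis using Wb by simp
  qed
  have sNsn: "(a^8 * q^2)^k * sN \<le> 2 * ((a^8 * q^2)^k * sn)" for k
    using mult_left_mono[OF sN Lp[of k]] by simp
  show "12 * (a^8 * q^2)^4 * sN * \<beta>^8 \<le> 1"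
  proof -
    have "(a^8 * q^2)^4 * sN * \<beta>^8 \<le> (2 * W) * \<beta>^8"
      by (intro mult_right_mono bb order_trans[OF sNsn]) (use m2 in simp)
    then show ?thesis using Wb by simp
  qed
  show "17000 * (a^8 * q^2)^7 * sN * \<beta>^8 \<le> 1"
  proof -
    have "(a^8 * q^2)^7 * sN * \<beta>^8 \<le> (2 * W) * \<beta>^8"
      by (intro mult_right_mono bb order_trans[OF sNsn]) (use m3 in simp)
    then show ?thesis using Wb by simp
  qed
  define V where "V = a^91 * sn^21 * q^14"
  define U where "U = a^21 * sn^3 * q^3"
  have U0: "0 \<le> U" using a1 sn1 q1 by (simp add: U_def)
  have "X^7 = 8^7 * (V * \<beta>^7)"
    by (simp add: X_def V_def power_mult_distrib power_mult[symmetric] algebra_simps)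
  moreover have "X^7 \<le> 1" using X0 X1 by (simp add: power_le_one)
  ultimately have Vb: "V * \<beta>^7 \<le> 1 / 8^7" by simp
  have m4: "(a^8 * q^2)^8 * sn \<le> V * U"
  proof -
    have "a^64 * sn^1 * q^16 \<le> a^112 * sn^24 * q^17" by (rule mono3) (use a1 sn1 q1 in auto)
    then show ?thesis by (simp add: V_def U_def power_mult_distrib power_mult[symmetric] algebra_simps power_add[symmetric])
  qed
  have "7000 * (a^8 * q^2)^8 * sN * \<beta>^8 \<le> 7000 * (2 * (V * U)) * \<beta>^8"
    using order_trans[OF sNsn[of 8] mult_left_mono[OF m4]] bb
    by (intro mult_right_mono) (simp_all add: algebra_simps)
  also have "\<dots> = 14000 * U * \<beta> * (V * \<beta>^7)" by (simp add: algebra_simps power_Suc[symmetric] eval_nat_numeral)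
  also have "\<dots> \<le> 14000 * U * \<beta> * (1 / 8^7)" using Vb U0 b0 by (intro mult_left_mono) auto
  also have "\<dots> \<le> 24 * \<beta> * U" using U0 b0 by (simp add: algebra_simps)
  finally show "7000 * (a^8 * q^2)^8 * sN * \<beta>^8 \<le> 24 * \<beta> * a^21 * sn^3 * q^3" by (simp add: U_def algebra_simps)
qed


theorem mainTheorem9:
  fixes S R' F :: "real^('n::finite + 'n)^('n + 'n)"
    and f :: "'n \<Rightarrow> nat" and s \<epsilon> :: real and D' :: "real^'n"
  assumes "symplectic S"
    and "opnorm S = exp s"
    and "0 \<le> \<epsilon>" and "\<epsilon> < 1/4"
    and "symmetric_mat F" and "opnorm F \<le> 1"
    and "valid_cov (S ** diag2 (\<chi> i. 1/2 + real (f i)) ** transpose S + \<epsilon> *\<^sub>R F)"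
    and "symplectic R'"
    and "\<forall>i. D' $ i > 0"
    and "S ** diag2 (\<chi> i. 1/2 + real (f i)) ** transpose S + \<epsilon> *\<^sub>R F
           = R' ** diag2 D' ** transpose R'"
  shows "\<exists>Q. symplectic Q \<and> orthogonal_matrix Q \<and>
           opnorm (matrix_inv R' ** S - Q)
             \<le> 24 * \<epsilon> powr (1/8) * exp (21 * s / 4) * real CARD('n) powr (3/2)
                * (1 + real (Max (range f))) powr (3/2)"
proof -
  note sympS = assms(1) and sympR = assms(8) and e0 = assms(3) and e14 = assms(4)
  define k :: "real^'n" where "k = (\<chi> i. 1/2 + real (f i))"
  define M' where "M' = S ** diag2 k ** transpose S + \<epsilon> *\<^sub>R F"
  have Meq: "M' = R' ** diag2 D' ** transpose R'" using assms(10) by (simp add: M'_def k_def)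
  have valid: "valid_cov M'" using assms(7) by (simp add: M'_def k_def)
  have Dge: "1/2 \<le> D' $ a" for a
  proof -
    have "D' $ a \<in> symplectic_eigenvalues M'"
      unfolding symplectic_eigenvalues_def using sympR assms(9) Meq by blast
    then show ?thesis using valid by (simp add: valid_cov_def)
  qed
  define c where "c = exp s"
  have cS: "opn S = c" using assms(2) by (simp add: opnorm_opn c_def)
  have c1: "1 \<le> c" using symp_opn_ge1[OF sympS] cS by simp
  define \<phi> where "\<phi> = 1 + real (Max (range f))"
  have fle: "real (f a) \<le> real (Max (range f))" for a by simp
  have phi1: "1 \<le> \<phi>" by (simp add: \<phi>_def)
  have bK0: "opn (diag2 k) \<le> \<phi> - 1/2"
    by (rule opn_diag2) (use fle in \<open>simp add: k_def \<phi>_def\<close>)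
  have bF: "opn F \<le> 1" using assms(6) by (simp add: opnorm_opn)
  have bM: "opn M' \<le> c^2 * \<phi>"
  proof -
    have "opn M' \<le> opn (S ** diag2 k ** transpose S) + opn (\<epsilon> *\<^sub>R F)" unfolding M'_def by (rule opn_add)
    also have "\<dots> \<le> c * (\<phi> - 1/2) * c + \<epsilon> * 1"
    proof (rule add_mono)
      show "opn (S ** diag2 k ** transpose S) \<le> c * (\<phi> - 1/2) * c"
        by (intro opn_mul_le bK0) (simp_all add: cS opn_transpose)
      show "opn (\<epsilon> *\<^sub>R F) \<le> \<epsilon> * 1" using mult_left_mono[OF bF e0] e0 by (simp add: opn_scaleR)
    qed
    also have "\<dots> \<le> c^2 * \<phi>"
    proof -
      have "1 \<le> c^2" using c1 by simp
      then show ?thesis using e14 by (simp add: power2_eq_square algebra_simps)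
    qed
    finally show ?thesis .
  qed
  define \<rho> where "\<rho> = opn R'"
  have r0: "0 \<le> \<rho>" by (simp add: \<rho>_def opn_nonneg)
  have bR: "\<rho>^2 \<le> 2 * (c^2 * \<phi>)"
    using opn_R_bound[OF Dge, of R'] Meq bM unfolding \<rho>_def by simp
  define Rinv where "Rinv = sinv R'"
  have Rinv_eq: "matrix_inv R' = Rinv" unfolding Rinv_def by (rule matrix_inv_eq[OF symp_right_inv[OF sympR]])
  have bRinv: "opn Rinv \<le> \<rho>" by (simp add: Rinv_def \<rho>_def opn_sinv)
  define T where "T = Rinv ** S"
  have sympT: "symplectic T" unfolding T_def Rinv_def by (intro symp_mult symp_sinv sympR sympS)
  have bT: "opn T \<le> \<rho> * c" unfolding T_def by (intro opn_mul_le bRinv) (simp add: cS)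
  define a where "a = exp (s/4)"
  have ca: "c = a^4" unfolding c_def a_def by (simp add: exp_of_nat_mult[symmetric])
  have a1: "1 \<le> a"
  proof -
    have "0 \<le> s" using c1 by (simp add: c_def)
    then show ?thesis by (simp add: a_def)
  qed
  define sn where "sn = sqrt (real CARD('n))"
  have cn: "0 < CARD('n)" by (rule finite_UNIV_card_ge_0) simp
  have cn': "(1::real) \<le> real CARD('n)" by (metis One_nat_def Suc_leI cn of_nat_le_iff of_nat_1)
  have sn1: "1 \<le> sn" unfolding sn_def using cn' by simp
  define q where "q = sqrt \<phi>"
  have q1: "1 \<le> q" unfolding q_def using phi1 by simp
  have phiq: "\<phi> = q^2" unfolding q_def using phi1 by simp
  define \<beta> where "\<beta> = \<epsilon> powr (1/8)"
  have b0: "0 \<le> \<beta>" by (simp add: \<beta>_def)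
  have eb: "\<epsilon> = \<beta>^8"
  proof -
    have "\<beta>^8 = (\<epsilon> powr (1/8)) powr 8" unfolding \<beta>_def using b0[unfolded \<beta>_def] by (simp add: powr_numeral)
    also have "\<dots> = \<epsilon>" using e0 by (simp add: powr_powr)
    finally show ?thesis by simp
  qed
  have Bexp: "24 * \<epsilon> powr (1/8) * exp (21 * s / 4) * real CARD('n) powr (3/2) * (1 + real (Max (range f))) powr (3/2)
      = 24 * \<beta> * a^21 * sn^3 * q^3"
  proof -
    have "exp (21 * s / 4) = a^21" unfolding a_def by (simp add: exp_of_nat_mult[symmetric])
    moreover have "real CARD('n) powr (3/2) = sn^3"
    proof -
      have "real CARD('n) powr (3/2) = (real CARD('n) powr (1/2)) powr 3" by (simp add: powr_powr)
      also have "\<dots> = sn^3" unfolding sn_def by (simp add: powr_half_sqrt)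
      finally show ?thesis .
    qed
    moreover have "(1 + real (Max (range f))) powr (3/2) = q^3"
    proof -
      have "\<phi> powr (3/2) = (\<phi> powr (1/2)) powr 3" by (simp add: powr_powr)
      also have "\<dots> = q^3" unfolding q_def using phi1 by (simp add: powr_half_sqrt)
      finally show ?thesis by (simp add: \<phi>_def)
    qed
    ultimately show ?thesis by (simp add: \<beta>_def)
  qed
  have rc: "\<rho> * c \<le> 2 * a^8 * q"
  proof -
    have "(\<rho> * c)^2 = \<rho>^2 * c^2" by (simp add: power_mult_distrib)
    also have "\<dots> \<le> 2 * (c^2 * \<phi>) * c^2" using bR by (intro mult_right_mono) auto
    also have "\<dots> = 2 * (a^8 * q)^2" by (simp add: ca phiq power_mult_distrib power_mult[symmetric] algebra_simps)
    also have "\<dots> \<le> (2 * a^8 * q)^2" by (simp add: power_mult_distrib)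
    finally have "(\<rho> * c)^2 \<le> (2 * a^8 * q)^2" .
    moreover have "0 \<le> 2 * a^8 * q" using a1 q1 by simp
    ultimately show ?thesis by (rule power2_le_imp_le)
  qed
  have aq1: "1 \<le> a^8 * q" using mult_mono[OF one_le_power[OF a1, of 8] q1] by simp
  show ?thesis
  proof (cases "1 \<le> \<beta> * (8 * a^13 * sn^3 * q^2)")
    case True
    have "opnorm (matrix_inv R' ** S - mat 1) = opn (T - mat 1)" by (simp add: opnorm_opn Rinv_eq T_def)
    also have "\<dots> \<le> opn T + 1"
    proof -
      have "opn (mat 1 :: real^('n+'n)^('n+'n)) \<le> 1" by (rule orth_opn[OF orthogonal_matrix_id])
      then show ?thesis using opn_diff[of T "mat 1"] by linarith
    qed
    also have "\<dots> \<le> 2 * a^8 * q + 1" using bT rc by linarith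
    also have "\<dots> \<le> 3 * (a^8 * q)" using aq1 by linarith
    also have "\<dots> \<le> 3 * (a^8 * q) * (\<beta> * (8 * a^13 * sn^3 * q^2))"
      using mult_left_mono[OF True, of "3 * (a^8 * q)"] aq1 by simp
    also have "\<dots> = 24 * \<beta> * (a^8 * a^13) * sn^3 * (q * q^2)" by (simp add: algebra_simps)
    also have "\<dots> = 24 * \<beta> * a^21 * sn^3 * q^3" by (simp add: power_add[symmetric] power_Suc[symmetric])
    finally have "opnorm (matrix_inv R' ** S - mat 1) \<le> 24 * \<beta> * a^21 * sn^3 * q^3" .
    moreover have "symplectic (mat 1 :: real^('n+'n)^('n+'n))" by (simp add: symplectic_def)
    ultimately show ?thesis using orthogonal_matrix_id Bexp by metis
  next
    case False
    then have small: "\<beta> * (8 * a^13 * sn^3 * q^2) < 1" by simp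
    define L where "L = a^8 * q^2"
    have L1: "1 \<le> L" unfolding L_def using mult_mono[OF one_le_power[OF a1, of 8] one_le_power[OF q1, of 2]] by simp
    have cphi: "c^2 * \<phi> = L" by (simp add: L_def ca phiq power_mult[symmetric])
    define sN where "sN = sqrt (real CARD('n+'n))"
    have sN0: "0 \<le> sN" by (simp add: sN_def)
    have sNle: "sN \<le> 2 * sn"
    proof -
      have "sN = sqrt 2 * sn" by (simp add: sN_def sn_def real_sqrt_mult)
      moreover have "sqrt 2 \<le> (2::real)" using real_sqrt_le_mono[of 2 "2^2"] by simp
      ultimately show ?thesis using sn1 by (simp add: mult_right_mono)
    qed
    note ar = regime2_arith[OF a1 sn1 q1 b0 small sNle sN0, folded L_def, folded eb]
    define G where "G = Rinv ** F ** transpose Rinv"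
    have RinvR: "Rinv ** R' = mat 1" unfolding Rinv_def by (rule symp_left_inv[OF sympR])
    have RtRinvt: "transpose R' ** transpose Rinv = mat 1"
      by (metis RinvR matrix_transpose_mul transpose_mat)
    have Dform: "diag2 D' = Rinv ** M' ** transpose Rinv"
    proof -
      have "Rinv ** M' ** transpose Rinv = (Rinv ** R') ** diag2 D' ** (transpose R' ** transpose Rinv)"
        by (simp add: Meq matrix_mul_assoc)
      then show ?thesis by (simp add: RinvR RtRinvt)
    qed
    have Keq: "diag2 D' = T ** diag2 k ** transpose T + \<epsilon> *\<^sub>R G"
      unfolding Dform M'_def T_def G_def
      by (simp add: msimps matrix_transpose_mul)
    have bTL: "opn T \<le> 2 * L"
    proof -
      have "2 * a^8 * q \<le> 2 * a^8 * q^2" using a1 q1 by (simp add: power2_eq_square)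
      then show ?thesis using bT rc by (simp add: L_def)
    qed
    have bKL: "opn (diag2 k) \<le> L"
    proof -
      have "1 \<le> c^2" using c1 by simp
      then have "1 * \<phi> \<le> c^2 * \<phi>" using phi1 by (intro mult_right_mono) auto
      then show ?thesis using bK0 cphi by simp
    qed
    have rho2: "\<rho>^2 \<le> 2 * L" using bR cphi by simp
    have bK'L: "opn (diag2 D') \<le> 2 * L^2"
    proof -
      have "opn (diag2 D') \<le> \<rho> * L * \<rho>"
        unfolding Dform by (intro opn_mul_le bRinv) (use bM cphi in \<open>simp_all add: opn_transpose bRinv\<close>)
      also have "\<dots> = \<rho>^2 * L" by (simp add: power2_eq_square)
      also have "\<dots> \<le> 2 * L * L" using rho2 L1 by (intro mult_right_mono) auto
      finally show ?thesis by (simp add: power2_eq_square)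
    qed
    have bGL: "opn G \<le> 2 * L"
    proof -
      have "opn G \<le> \<rho> * 1 * \<rho>" unfolding G_def by (intro opn_mul_le bRinv bF) (simp add: opn_transpose bRinv)
      then show ?thesis using rho2 by (simp add: power2_eq_square)
    qed
    have s1: "24 * L^5 * \<epsilon> \<le> 1/2" using ar(1) .
    have s2: "12 * L^4 * sqrt (real CARD('n+'n)) * \<epsilon> \<le> 1" using ar(2) by (simp add: sN_def)
    have comm: "norm (Omega ** T - T ** Omega) \<le> 248 * L^6 * sN * \<epsilon>"
      using comm_lemma[OF sympT Keq[unfolded k_def] Dge e0 L1 bTL bKL[unfolded k_def] bK'L bGL s1 s2]
      by (simp add: sN_def)
    define \<gamma> where "\<gamma> = 248 * L^6 * sN * \<epsilon>"
    have g0: "0 \<le> \<gamma>" using L1 sN0 e0 by (simp add: \<gamma>_def)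
    have Lg: "L * \<gamma> \<le> 1/68"
    proof -
      have "L^7 = L * L^6" by (simp add: power_Suc[symmetric])
      then have "L * \<gamma> = 248 * (L^7 * sN * \<epsilon>)" by (simp add: \<gamma>_def mult.assoc mult.left_commute)
      then show ?thesis using ar(3) by simp
    qed
    have g1: "\<gamma> \<le> 1"
    proof -
      have "1 * \<gamma> \<le> L * \<gamma>" using L1 g0 by (intro mult_right_mono) auto
      then show ?thesis using Lg by simp
    qed
    have sm: "2 * (2*L) * \<gamma> + \<gamma>/4 \<le> 1/16"
    proof -
      have "1 * \<gamma> \<le> L * \<gamma>" by (rule mult_right_mono[OF L1 g0])
      then show ?thesis using Lg by linarith
    qed
    obtain Q where sympQ: "symplectic Q" and orthQ: "orthogonal_matrix Q"
      and TQ: "norm (T - Q) \<le> \<gamma>/2 + (2*L+1) * (2*(2*(2*L)*\<gamma> + \<gamma>/4))"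
      using orth_lemma[OF sympT bTL comm[folded \<gamma>_def] g1 sm] by blast
    have "opnorm (matrix_inv R' ** S - Q) \<le> norm (T - Q)"
      by (simp add: opnorm_opn Rinv_eq T_def opn_le_frob)
    also have "\<dots> \<le> 28 * (L^2 * \<gamma>)"
    proof -
      have "\<gamma>/2 + (2*L+1) * (2*(2*(2*L)*\<gamma> + \<gamma>/4)) = \<gamma>/2 + (2*L+1) * (8*(L*\<gamma>) + \<gamma>/2)"
        by (simp add: algebra_simps)
      also have "\<dots> \<le> L^2*\<gamma> + (3*L) * (8*(L*\<gamma>) + L*\<gamma>)"
      proof -
        have "1 * \<gamma> \<le> L * \<gamma>" by (rule mult_right_mono[OF L1 g0])
        moreover have "1 * (L * \<gamma>) \<le> L * (L * \<gamma>)" using L1 g0 by (intro mult_right_mono) auto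
        ultimately have u: "\<gamma> \<le> L * \<gamma>" and v: "L * \<gamma> \<le> L^2 * \<gamma>" by (simp_all add: power2_eq_square mult.assoc)
        have h1: "\<gamma>/2 \<le> L^2*\<gamma>" using u v g0 by linarith
        have h2: "(2*L+1) * (8*(L*\<gamma>) + \<gamma>/2) \<le> (3*L) * (8*(L*\<gamma>) + L*\<gamma>)"
          by (rule mult_mono) (use u g0 L1 in \<open>auto intro: mult_nonneg_nonneg\<close>)
        show ?thesis using h1 h2 by linarith
      qed
      also have "\<dots> = 28 * (L^2 * \<gamma>)" by (simp add: algebra_simps power2_eq_square)
      finally show ?thesis using TQ by linarith
    qed
    also have "\<dots> = 6944 * (L^2 * L^6) * sN * \<epsilon>" by (simp add: \<gamma>_def mult.assoc mult.left_commute)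
    also have "\<dots> = 6944 * L^8 * sN * \<beta>^8" by (simp add: eb power_add[symmetric])
    also have "\<dots> \<le> 7000 * L^8 * sN * \<beta>^8"
      using L1 sN0 b0 by (intro mult_right_mono) auto
    also have "\<dots> \<le> 24 * \<beta> * a^21 * sn^3 * q^3" using ar(4) by (simp add: eb)
    finally show ?thesis using sympQ orthQ Bexp by metis
  qed
qed


end
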